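(* Over any field of characteristic different from 2, the family $(f_k)$ with $f_k=f_{G_k,H_k}(\bar Y)$, where $G_k$ is the simple undirected cycle of length $2k+1$ and $H_k$ is the undirected complete graph on $(2k+1)^2$ vertices, is complete for $\mathsf{VBP}$ under $p$-projections.
   Context: For graphs $G,H$, a homomorphism $G\to H$ is a vertex map preserving edges. With a variable $Y_{(a,b)}$ for each edge $(a,b)\in E(H)$, the homomorphism polynomial is $f_{G,H}(\bar Y)=\sum_{\phi}\prod_{(u,v)\in E(G)}Y_{(\phi(u),\phi(v))}$, the sum over all homomorphisms $\phi:G\to H$. $\mathsf{VBP}$ is the class of $p$-families (polynomially bounded number of variables and degree) computed by polynomial-size skew arithmetic circuits (at each $\times$ gate at most one input is the output of another gate). A projection of $g$ substitutes field constants or variables for the variables of $g$; $(f_n)$ is a $p$-projection of $(g_m)$ if each $f_n$ is a projection of $g_{t(n)}$ with $t$ polynomially bounded. Complete for $\mathsf{VBP}$ under $p$-projections means the family is in $\mathsf{VBP}$ and every family in $\mathsf{VBP}$ is a $p$-projection of it. *)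

theory Defs
  imports Main "HOL-Library.Poly_Mapping" "HOL-Library.FuncSet" "HOL-Library.Nat_Bijection"
begin

type_synonym 'k mpoly = "(nat \<Rightarrow>\<^sub>0 nat) \<Rightarrow>\<^sub>0 'k"

definition pVar :: "nat \<Rightarrow> 'k::field mpoly" where
  "pVar i = Poly_Mapping.single (Poly_Mapping.single i 1) 1"

definition pConst :: "'k::field \<Rightarrow> 'k mpoly" where
  "pConst c = Poly_Mapping.single 0 c"

definition pvars :: "'k::field mpoly \<Rightarrow> nat set" where
  "pvars p = (\<Union>m\<in>Poly_Mapping.keys p. Poly_Mapping.keys (m :: nat \<Rightarrow>\<^sub>0 nat))"

definition pdeg :: "'k::field mpoly \<Rightarrow> nat" where
  "pdeg p = Max (insert 0 ((\<lambda>m. sum (Poly_Mapping.lookup m) (Poly_Mapping.keys m)) ` Poly_Mapping.keys p))"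

definition psubst :: "(nat \<Rightarrow> 'k::field mpoly) \<Rightarrow> 'k mpoly \<Rightarrow> 'k mpoly" where
  "psubst \<sigma> p = (\<Sum>m\<in>Poly_Mapping.keys p. pConst (Poly_Mapping.lookup p m) * (\<Prod>v\<in>Poly_Mapping.keys m. \<sigma> v ^ Poly_Mapping.lookup m v))"

definition is_projection :: "'k::field mpoly \<Rightarrow> 'k mpoly \<Rightarrow> bool" where
  "is_projection f g \<longleftrightarrow>
     (\<exists>\<sigma>. (\<forall>v. (\<exists>c. \<sigma> v = pConst c) \<or> (\<exists>w. \<sigma> v = pVar w)) \<and> f = psubst \<sigma> g)"

definition poly_bounded :: "(nat \<Rightarrow> nat) \<Rightarrow> bool" where
  "poly_bounded t \<longleftrightarrow> (\<exists>c. \<forall>n. t n \<le> (n + 2) ^ c)"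

definition p_family :: "(nat \<Rightarrow> 'k::field mpoly) \<Rightarrow> bool" where
  "p_family f \<longleftrightarrow> (\<exists>b. poly_bounded b \<and> (\<forall>n. card (pvars (f n)) \<le> b n \<and> pdeg (f n) \<le> b n))"

definition p_projection :: "(nat \<Rightarrow> 'k::field mpoly) \<Rightarrow> (nat \<Rightarrow> 'k mpoly) \<Rightarrow> bool" where
  "p_projection f g \<longleftrightarrow> (\<exists>t. poly_bounded t \<and> (\<forall>n. is_projection (f n) (g (t n))))"

datatype 'k gate = GVar nat | GConst 'k | GAdd nat nat | GMul nat nat

definition is_input_gate :: "'k gate \<Rightarrow> bool" where
  "is_input_gate g \<longleftrightarrow> (case g of GVar _ \<Rightarrow> True | GConst _ \<Rightarrow> True | _ \<Rightarrow> False)"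

definition circuit_wf :: "'k gate list \<Rightarrow> bool" where
  "circuit_wf C \<longleftrightarrow> C \<noteq> [] \<and> (\<forall>i<length C. case C ! i of
       GAdd j l \<Rightarrow> j < i \<and> l < i
     | GMul j l \<Rightarrow> j < i \<and> l < i
     | _ \<Rightarrow> True)"

definition circuit_skew :: "'k gate list \<Rightarrow> bool" where
  "circuit_skew C \<longleftrightarrow> (\<forall>i<length C. case C ! i of
       GMul j l \<Rightarrow> is_input_gate (C ! j) \<or> is_input_gate (C ! l)
     | _ \<Rightarrow> True)"

fun gate_val :: "'k::field mpoly list \<Rightarrow> 'k gate \<Rightarrow> 'k mpoly" where
  "gate_val vs (GVar v) = pVar v"
| "gate_val vs (GConst c) = pConst c"
| "gate_val vs (GAdd j l) = vs ! j + vs ! l"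
| "gate_val vs (GMul j l) = vs ! j * vs ! l"

definition circuit_vals :: "'k::field gate list \<Rightarrow> 'k mpoly list" where
  "circuit_vals C = foldl (\<lambda>vs g. vs @ [gate_val vs g]) [] C"

definition circuit_output :: "'k::field gate list \<Rightarrow> 'k mpoly" where
  "circuit_output C = last (circuit_vals C)"

definition VBP :: "(nat \<Rightarrow> 'k::field mpoly) set" where
  "VBP = {f. p_family f \<and>
     (\<exists>s. poly_bounded s \<and> (\<forall>n. \<exists>C. circuit_wf C \<and> circuit_skew C \<and>
            length C \<le> s n \<and> circuit_output C = f n))}"

definition VBP_complete :: "(nat \<Rightarrow> 'k::field mpoly) \<Rightarrow> bool" where
  "VBP_complete f \<longleftrightarrow> f \<in> VBP \<and> (\<forall>g\<in>VBP. p_projection g f)"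

text \<open>Undirected edge variable Y_{a,b} for the edge {a,b} of the complete graph.\<close>
definition edge_var :: "nat \<Rightarrow> nat \<Rightarrow> 'k::field mpoly" where
  "edge_var a b = pVar (prod_encode (min a b, max a b))"

text \<open>G_k: simple cycle on vertices 0..2k with edges {i, (i+1) mod (2k+1)};
  H_k: complete graph (no loops) on (2k+1)^2 vertices.\<close>
definition cycle_hom_poly :: "nat \<Rightarrow> 'k::field mpoly" where
  "cycle_hom_poly k =
     (let m = 2 * k + 1; n = m ^ 2 in
      \<Sum>\<phi>\<in>{\<phi>\<in>{0..<m} \<rightarrow>\<^sub>E {0..<n}. \<forall>i<m. \<phi> i \<noteq> \<phi> ((i + 1) mod m)}.
        \<Prod>i<m. edge_var (\<phi> i) (\<phi> ((i + 1) mod m)))"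

end

theory Submission
  imports Defs
begin

definition mmono :: "(nat \<Rightarrow> 'k::field mpoly) \<Rightarrow> (nat \<Rightarrow>\<^sub>0 nat) \<Rightarrow> 'k mpoly" where
  "mmono \<sigma> m = (\<Prod>v\<in>Poly_Mapping.keys m. \<sigma> v ^ Poly_Mapping.lookup m v)"

lemma mono_superset:
  assumes "finite S" "Poly_Mapping.keys m \<subseteq> S"
  shows "mmono \<sigma> m = (\<Prod>v\<in>S. \<sigma> v ^ Poly_Mapping.lookup m v)"
  unfolding mmono_def
  by (rule prod.mono_neutral_left[OF assms]) (auto simp: in_keys_iff)

lemma mono_add: "mmono \<sigma> (a + b) = mmono \<sigma> a * mmono \<sigma> b"
proof -
  let ?S = "Poly_Mapping.keys a \<union> Poly_Mapping.keys b"
  have "mmono \<sigma> (a+b) = (\<Prod>v\<in>?S. \<sigma> v ^ Poly_Mapping.lookup (a+b) v)"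
    by (rule mono_superset) (simp_all add: keys_add)
  also have "\<dots> = (\<Prod>v\<in>?S. \<sigma> v ^ Poly_Mapping.lookup a v) * (\<Prod>v\<in>?S. \<sigma> v ^ Poly_Mapping.lookup b v)"
    by (simp add: lookup_add power_add prod.distrib)
  also have "\<dots> = mmono \<sigma> a * mmono \<sigma> b"
    by (simp add: mono_superset[symmetric])
  finally show ?thesis .
qed

lemma mono_zero[simp]: "mmono \<sigma> 0 = 1"
  by (simp add: mmono_def)

lemma pConst_add: "pConst (a + b) = pConst a + pConst b"
  by (simp add: pConst_def single_add)
lemma pConst_mult: "pConst (a * b) = pConst a * pConst b"
  by (simp add: pConst_def mult_single)
lemma pConst_0[simp]: "pConst 0 = 0"
  by (simp add: pConst_def)
lemma pConst_1[simp]: "pConst 1 = 1"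
  by (simp add: pConst_def)
lemma pConst_of_nat: "pConst (of_nat n) = of_nat n"
  by (simp add: pConst_def)

lemma psubst_superset:
  assumes "finite S" "Poly_Mapping.keys p \<subseteq> S"
  shows "psubst \<sigma> p = (\<Sum>m\<in>S. pConst (Poly_Mapping.lookup p m) * mmono \<sigma> m)"
  unfolding psubst_def mmono_def[symmetric]
  by (rule sum.mono_neutral_left[OF assms]) (auto simp: in_keys_iff)

lemma psubst_add: "psubst \<sigma> (p + q) = psubst \<sigma> p + psubst \<sigma> q"
proof -
  let ?S = "Poly_Mapping.keys p \<union> Poly_Mapping.keys q"
  have "psubst \<sigma> (p+q) = (\<Sum>m\<in>?S. pConst (Poly_Mapping.lookup (p+q) m) * mmono \<sigma> m)"
    by (rule psubst_superset) (simp_all add: keys_add)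
  also have "\<dots> = (\<Sum>m\<in>?S. pConst (Poly_Mapping.lookup p m) * mmono \<sigma> m) + (\<Sum>m\<in>?S. pConst (Poly_Mapping.lookup q m) * mmono \<sigma> m)"
    by (simp add: lookup_add pConst_add distrib_right sum.distrib)
  also have "\<dots> = psubst \<sigma> p + psubst \<sigma> q"
    by (simp add: psubst_superset[symmetric])
  finally show ?thesis .
qed

lemma psubst_0[simp]: "psubst \<sigma> 0 = 0"
  by (simp add: psubst_def)

lemma psubst_sum: "psubst \<sigma> (sum f A) = (\<Sum>a\<in>A. psubst \<sigma> (f a))"
  by (induction A rule: infinite_finite_induct) (auto simp: psubst_add)

lemma psubst_single: "psubst \<sigma> (Poly_Mapping.single m c) = pConst c * mmono \<sigma> m"
proof -
  have "psubst \<sigma> (Poly_Mapping.single m c) = (\<Sum>m'\<in>{m}. pConst (Poly_Mapping.lookup (Poly_Mapping.single m c) m') * mmono \<sigma> m')"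
    by (rule psubst_superset) auto
  then show ?thesis by simp
qed

lemma poly_expand: "(p::'a \<Rightarrow>\<^sub>0 'b::comm_monoid_add) = (\<Sum>m\<in>Poly_Mapping.keys p. Poly_Mapping.single m (Poly_Mapping.lookup p m))"
  by (rule poly_mapping_eqI)
     (auto simp: lookup_sum lookup_single when_def in_keys_iff sum.delta' split: if_splits)

lemma psubst_mult: "psubst \<sigma> (p * q) = psubst \<sigma> p * psubst \<sigma> q"
proof -
  have e: "p * q = (\<Sum>m\<in>Poly_Mapping.keys p. \<Sum>m'\<in>Poly_Mapping.keys q.
        Poly_Mapping.single m (Poly_Mapping.lookup p m) * Poly_Mapping.single m' (Poly_Mapping.lookup q m'))"
    apply (subst poly_expand[of p]) apply (subst poly_expand[of q])
    by (simp add: sum_distrib_left sum_distrib_right sum.swap[of _ "Poly_Mapping.keys q"])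
  have s: "psubst \<sigma> (Poly_Mapping.single m a * Poly_Mapping.single m' b) =
     psubst \<sigma> (Poly_Mapping.single m a) * psubst \<sigma> (Poly_Mapping.single m' b)" for m m' a b
    by (simp add: mult_single psubst_single mono_add pConst_mult mult_ac)
  have hp: "psubst \<sigma> p = (\<Sum>m\<in>Poly_Mapping.keys p. psubst \<sigma> (Poly_Mapping.single m (Poly_Mapping.lookup p m)))" for p
  proof -
    have "psubst \<sigma> p = psubst \<sigma> (\<Sum>m\<in>Poly_Mapping.keys p. Poly_Mapping.single m (Poly_Mapping.lookup p m))"
      by (rule arg_cong[where f="psubst \<sigma>"], rule poly_expand)
    then show ?thesis by (simp only: psubst_sum)
  qed
  show ?thesis
    unfolding e hp[of p] hp[of q]
    by (simp only: psubst_sum s sum_distrib_left sum_distrib_right) (rule sum.swap)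
qed

lemma psubst_1[simp]: "psubst \<sigma> 1 = 1"
  using psubst_single[of \<sigma> 0 1] by (simp del: single_one add: single_one[symmetric])

lemma psubst_prod: "psubst \<sigma> (prod f A) = (\<Prod>a\<in>A. psubst \<sigma> (f a))"
  by (induction A rule: infinite_finite_induct) (auto simp: psubst_mult)

lemma psubst_pVar[simp]: "psubst \<sigma> (pVar i) = \<sigma> i"
  by (simp add: pVar_def psubst_single mmono_def)

lemma psubst_pConst[simp]: "psubst \<sigma> (pConst c) = pConst c"
  by (simp add: pConst_def psubst_single)

definition sem :: "(nat \<Rightarrow> 'k::field mpoly) \<Rightarrow> 'k gate \<Rightarrow> 'k mpoly" where
  "sem V g = (case g of GVar v \<Rightarrow> pVar v | GConst c \<Rightarrow> pConst c | GAdd j l \<Rightarrow> V j + V l | GMul j l \<Rightarrow> V j * V l)"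

definition gate_ok :: "nat \<Rightarrow> 'k gate \<Rightarrow> bool" where
  "gate_ok i g = (case g of GAdd j l \<Rightarrow> j < i \<and> l < i | GMul j l \<Rightarrow> j < i \<and> l < i | _ \<Rightarrow> True)"

lemma circuit_wf_alt: "circuit_wf C \<longleftrightarrow> C \<noteq> [] \<and> (\<forall>i<length C. gate_ok i (C ! i))"
  unfolding circuit_wf_def gate_ok_def by simp

lemma foldl_prefix: "\<exists>X. foldl (\<lambda>vs g. vs @ [gate_val vs g]) vs B = vs @ X"
  by (induction B arbitrary: vs) (auto, metis append.assoc)

lemma circuit_vals_snoc: "circuit_vals (C @ [g]) = circuit_vals C @ [gate_val (circuit_vals C) g]"
  by (simp add: circuit_vals_def)

lemma length_circuit_vals[simp]: "length (circuit_vals C) = length C"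
  by (induction C rule: rev_induct) (auto simp: circuit_vals_snoc, simp add: circuit_vals_def)

lemma circuit_vals_append: "\<exists>X. circuit_vals (A @ B) = circuit_vals A @ X"
  unfolding circuit_vals_def foldl_append by (rule foldl_prefix)

lemma gate_val_sem:
  assumes "gate_ok i g" "length vs \<ge> i"
  shows "gate_val vs g = sem (\<lambda>j. vs ! j) g"
  using assms by (cases g) (auto simp: sem_def gate_ok_def)

lemma circuit_vals_nth:
  assumes "i < length C"
  shows "circuit_vals C ! i = gate_val (take i (circuit_vals C)) (C ! i)"
proof -
  have C: "C = (take i C @ [C ! i]) @ drop (Suc i) C"
    using assms by (simp add: Cons_nth_drop_Suc)
  obtain X where X: "circuit_vals C = (circuit_vals (take i C) @ [gate_val (circuit_vals (take i C)) (C ! i)]) @ X"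
    using circuit_vals_append[of "take i C @ [C ! i]" "drop (Suc i) C"] C circuit_vals_snoc by metis
  have l: "length (circuit_vals (take i C)) = i" using assms by simp
  show ?thesis using X l by (simp add: nth_append)
qed

lemma circuit_vals_sem:
  assumes "circuit_wf C" "i < length C"
  shows "circuit_vals C ! i = sem (\<lambda>j. circuit_vals C ! j) (C ! i)"
proof -
  have ok: "gate_ok i (C ! i)" using assms by (simp add: circuit_wf_alt)
  have "circuit_vals C ! i = sem (\<lambda>j. take i (circuit_vals C) ! j) (C ! i)"
    using circuit_vals_nth[OF assms(2)] gate_val_sem[OF ok] assms(2) by simp
  also have "\<dots> = sem (\<lambda>j. circuit_vals C ! j) (C ! i)"
    using ok by (cases "C ! i") (auto simp: sem_def gate_ok_def)
  finally show ?thesis .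
qed

lemma circuit_vals_eqI:
  assumes "circuit_wf C" "\<And>i. i < length C \<Longrightarrow> V i = sem V (C ! i)"
  shows "i < length C \<Longrightarrow> circuit_vals C ! i = V i"
proof (induction i rule: less_induct)
  case (less i)
  have ok: "gate_ok i (C ! i)" using assms less by (simp add: circuit_wf_alt)
  have "circuit_vals C ! i = sem (\<lambda>j. circuit_vals C ! j) (C ! i)"
    by (rule circuit_vals_sem[OF assms(1) less.prems])
  also have "\<dots> = sem V (C ! i)"
    using ok less by (cases "C ! i") (auto simp: sem_def gate_ok_def)
  also have "\<dots> = V i" using assms(2)[OF less.prems] by simp
  finally show ?case .
qed

lemma circuit_output_eqI:
  assumes "circuit_wf C" "\<And>i. i < length C \<Longrightarrow> V i = sem V (C ! i)"
  shows "circuit_output C = V (length C - 1)"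
proof -
  have ne: "C \<noteq> []" using assms(1) by (simp add: circuit_wf_def)
  have "circuit_output C = circuit_vals C ! (length C - 1)"
    unfolding circuit_output_def using ne
    by (metis last_conv_nth length_circuit_vals length_0_conv)
  also have "\<dots> = V (length C - 1)"
    using circuit_vals_eqI[OF assms, of "length C - 1"] ne by simp
  finally show ?thesis .
qed

lemma sum_PiE_Suc:
  "(\<Sum>u\<in>{0..<Suc n} \<rightarrow>\<^sub>E S. f u) = (\<Sum>y\<in>S. \<Sum>g\<in>{0..<n} \<rightarrow>\<^sub>E S. f (g(n := y)))"
proof -
  have "{0..<Suc n} = insert n {0..<n}" by auto
  then have "(\<Sum>u\<in>{0..<Suc n} \<rightarrow>\<^sub>E S. f u) = (\<Sum>u\<in>(\<lambda>(y, g). g(n := y)) ` (S \<times> ({0..<n} \<rightarrow>\<^sub>E S)). f u)"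
    by (simp add: PiE_insert_eq)
  also have "\<dots> = (\<Sum>p\<in>S \<times> ({0..<n} \<rightarrow>\<^sub>E S). f ((\<lambda>(y, g). g(n := y)) p))"
    by (rule sum.reindex_cong[OF inj_combinator]) auto
  also have "\<dots> = (\<Sum>y\<in>S. \<Sum>g\<in>{0..<n} \<rightarrow>\<^sub>E S. f (g(n := y)))"
    by (subst sum.cartesian_product) (simp add: split_def)
  finally show ?thesis .
qed

lemma if_conj_eq: "(if P \<and> y = v then X else 0) = (if y = v then (if P then X else 0) else 0)"
  by auto

lemma if_conj_split: "(if P \<and> Q then X else 0) = (if P then (if Q then X else 0) else 0)"
  by auto

lemma double_delta:
  fixes X :: "'b \<Rightarrow> 'b \<Rightarrow> 'a::comm_ring_1"
  assumes "finite S" "a \<in> S" "b \<in> S"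
  shows "(\<Sum>s\<in>S. \<Sum>v\<in>S. (if a = s \<and> b = v then 1 else 0) * X v s) = X b a"
proof -
  have "(\<Sum>s\<in>S. \<Sum>v\<in>S. (if a = s \<and> b = v then 1 else 0) * X v s) = (\<Sum>s\<in>S. if a = s then X b s else 0)"
  proof (rule sum.cong[OF refl])
    fix s assume "s \<in> S"
    show "(\<Sum>v\<in>S. (if a = s \<and> b = v then 1 else 0) * X v s) = (if a = s then X b s else 0)"
      using assms by (cases "a = s") (simp_all add: sum.delta' if_distrib[of "\<lambda>x. x * _"] cong: if_cong)
  qed
  also have "\<dots> = X b a" using assms by (simp add: sum.delta')
  finally show ?thesis .
qed

definition Pw :: "(nat \<Rightarrow> 'b \<Rightarrow> 'b \<Rightarrow> 'a::comm_ring_1) \<Rightarrow> 'b set \<Rightarrow> 'b \<Rightarrow> nat \<Rightarrow> 'b \<Rightarrow> 'a" where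
  "Pw F S s n v = (\<Sum>u\<in>{0..<Suc n} \<rightarrow>\<^sub>E S. (if u 0 = s \<and> u n = v then 1 else 0) * (\<Prod>i<n. F i (u i) (u (Suc i))))"

lemma Pw_0:
  assumes "finite S" "v \<in> S"
  shows "Pw F S s 0 v = (if s = v then 1 else 0)"
proof -
  have "Pw F S s 0 v = (\<Sum>y\<in>S. (if y = s \<and> y = v then 1 else 0))"
    unfolding Pw_def by (subst sum_PiE_Suc) simp
  also have "\<dots> = (if s = v then 1 else 0)"
    using assms by (auto simp: sum.delta intro: sum.neutral)
  finally show ?thesis .
qed

lemma Pw_Suc:
  assumes "finite S" "v \<in> S"
  shows "Pw F S s (Suc n) v = (\<Sum>w\<in>S. Pw F S s n w * F n w v)"
proof -
  have pe: "(\<Prod>i<Suc n. F i ((g(Suc n := y)) i) ((g(Suc n := y)) (Suc i))) =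
     (\<Prod>i<n. F i (g i) (g (Suc i))) * F n (g n) y" for g y
    by (simp add: prod.lessThan_Suc)
  have "Pw F S s (Suc n) v = (\<Sum>y\<in>S. \<Sum>g\<in>{0..<Suc n} \<rightarrow>\<^sub>E S.
      (if g 0 = s \<and> y = v then 1 else 0) * ((\<Prod>i<n. F i (g i) (g (Suc i))) * F n (g n) y))"
    unfolding Pw_def by (subst sum_PiE_Suc) (simp add: pe)
  also have "\<dots> = (\<Sum>g\<in>{0..<Suc n} \<rightarrow>\<^sub>E S. (if g 0 = s then 1 else 0) * ((\<Prod>i<n. F i (g i) (g (Suc i))) * F n (g n) v))"
    using assms by (subst sum.swap) (simp add: if_distrib[of "\<lambda>x. x * _"] if_conj_eq sum.delta cong: if_cong)
  also have "\<dots> = (\<Sum>g\<in>{0..<Suc n} \<rightarrow>\<^sub>E S. \<Sum>w\<in>S. (if g 0 = s \<and> g n = w then 1 else 0) * (\<Prod>i<n. F i (g i) (g (Suc i))) * F n w v)"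
  proof (rule sum.cong[OF refl])
    fix g assume g: "g \<in> {0..<Suc n} \<rightarrow>\<^sub>E S"
    then have gn: "g n \<in> S" by auto
    show "(if g 0 = s then 1 else 0) * ((\<Prod>i<n. F i (g i) (g (Suc i))) * F n (g n) v) =
      (\<Sum>w\<in>S. (if g 0 = s \<and> g n = w then 1 else 0) * (\<Prod>i<n. F i (g i) (g (Suc i))) * F n w v)"
      using gn assms(1) by (simp add: if_distrib[of "\<lambda>x. x * _"] sum.delta cong: if_cong)
  qed
  also have "\<dots> = (\<Sum>w\<in>S. Pw F S s n w * F n w v)"
    unfolding Pw_def by (simp only: sum_distrib_right) (rule sum.swap)
  finally show ?thesis .
qed

lemma closed_sum:
  assumes "finite S"
  shows "(\<Sum>u\<in>{0..<Suc n} \<rightarrow>\<^sub>E S. \<Prod>i<Suc n. F i (u i) (u ((i + 1) mod Suc n))) =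
         (\<Sum>s\<in>S. \<Sum>v\<in>S. Pw F S s n v * F n v s)"
proof -
  have pe: "(\<Prod>i<Suc n. F i (u i) (u ((i + 1) mod Suc n))) = (\<Prod>i<n. F i (u i) (u (Suc i))) * F n (u n) (u 0)" for u
  proof -
    have "(\<Prod>i<n. F i (u i) (u ((i + 1) mod Suc n))) = (\<Prod>i<n. F i (u i) (u (Suc i)))"
      by (rule prod.cong) auto
    then show ?thesis by (simp add: prod.lessThan_Suc)
  qed
  have "(\<Sum>s\<in>S. \<Sum>v\<in>S. Pw F S s n v * F n v s) =
     (\<Sum>u\<in>{0..<Suc n} \<rightarrow>\<^sub>E S. \<Sum>s\<in>S. \<Sum>v\<in>S. (if u 0 = s \<and> u n = v then 1 else 0) * (\<Prod>i<n. F i (u i) (u (Suc i))) * F n v s)"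
    unfolding Pw_def sum_distrib_right
    apply (subst sum.swap)
    apply (rule sum.swap)
    done
  also have "\<dots> = (\<Sum>u\<in>{0..<Suc n} \<rightarrow>\<^sub>E S. (\<Prod>i<n. F i (u i) (u (Suc i))) * F n (u n) (u 0))"
  proof (rule sum.cong[OF refl])
    fix u assume u: "u \<in> {0..<Suc n} \<rightarrow>\<^sub>E S"
    then have "u 0 \<in> S" "u n \<in> S" by auto
    then show "(\<Sum>s\<in>S. \<Sum>v\<in>S. (if u 0 = s \<and> u n = v then 1 else 0) * (\<Prod>i<n. F i (u i) (u (Suc i))) * F n v s) =
        (\<Prod>i<n. F i (u i) (u (Suc i))) * F n (u n) (u 0)"
      using assms double_delta[of S "u 0" "u n" "\<lambda>v s. (\<Prod>i<n. F i (u i) (u (Suc i))) * F n v s"]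
      by (simp add: mult.assoc)
  qed
  finally show ?thesis by (simp add: pe)
qed

definition fwd :: "nat \<Rightarrow> (nat \<Rightarrow> nat) \<Rightarrow> nat \<Rightarrow> bool" where
  "fwd m \<phi> i \<longleftrightarrow> \<phi> ((i + 1) mod m) div m = Suc (\<phi> i div m) mod m"
definition bwd :: "nat \<Rightarrow> (nat \<Rightarrow> nat) \<Rightarrow> nat \<Rightarrow> bool" where
  "bwd m \<phi> i \<longleftrightarrow> \<phi> i div m = Suc (\<phi> ((i + 1) mod m) div m) mod m"

lemma winding:
  assumes odd: "odd m" and fb: "\<forall>i<m. fwd m \<phi> i \<or> bwd m \<phi> i"
  shows "(\<forall>i<m. fwd m \<phi> i) \<or> (\<forall>i<m. bwd m \<phi> i)"
proof -
  have m0: "m > 0" using odd by (cases m) auto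
  define L where "L i = int (\<phi> (i mod m) div m)" for i
  define d where "d i = (if fwd m \<phi> i then 1 else -1::int)" for i
  have modd: "int m dvd (x mod int m) - x" for x :: int
    by (simp only: mod_eq_dvd_iff[symmetric] mod_mod_trivial)
  have step: "int m dvd L (Suc i) - L i - d i" if "i < m" for i
  proof (cases "fwd m \<phi> i")
    case True
    then have "\<phi> ((i + 1) mod m) div m = Suc (\<phi> i div m) mod m" by (simp add: fwd_def)
    then have e: "L (Suc i) = (L i + 1) mod int m"
      using that by (simp add: L_def zmod_int add.commute)
    have "L (Suc i) - L i - d i = ((L i + 1) mod int m) - (L i + 1)"
      using True e by (simp add: d_def)
    then show ?thesis using modd[of "L i + 1"] by (simp only:)
  next
    case False
    then have "bwd m \<phi> i" using fb that by auto
    then have "\<phi> i div m = Suc (\<phi> ((i + 1) mod m) div m) mod m" by (simp add: bwd_def)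
    then have e: "L i = (L (Suc i) + 1) mod int m"
      using that by (simp add: L_def zmod_int add.commute)
    have "L (Suc i) - L i - d i = - (((L (Suc i) + 1) mod int m) - (L (Suc i) + 1))"
      using False e by (simp add: d_def)
    then show ?thesis using modd[of "L (Suc i) + 1"] by (simp only: dvd_minus_iff)
  qed
  have acc: "int m dvd L i - L 0 - (\<Sum>j<i. d j)" if "i \<le> m" for i
    using that
  proof (induction i)
    case 0 then show ?case by simp
  next
    case (Suc i)
    have "int m dvd (L i - L 0 - (\<Sum>j<i. d j)) + (L (Suc i) - L i - d i)"
      using Suc step by (intro dvd_add) auto
    then show ?case by (simp add: algebra_simps)
  qed
  have Lm: "L m = L 0" by (simp add: L_def)
  define c where "c = card {j\<in>{..<m}. fwd m \<phi> j}"
  have c_le: "c \<le> m" unfolding c_def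
    using card_mono[of "{..<m}" "{j\<in>{..<m}. fwd m \<phi> j}"] by auto
  have sd: "(\<Sum>j<m. d j) = 2 * int c - int m"
  proof -
    have "(\<Sum>j<m. d j) = (\<Sum>j<m. 2 * (if fwd m \<phi> j then 1 else 0) - 1)"
      by (rule sum.cong) (auto simp: d_def)
    also have "\<dots> = 2 * (\<Sum>j<m. (if fwd m \<phi> j then 1 else 0::int)) - int m"
      by (simp add: sum_subtractf sum_distrib_left)
    also have "(\<Sum>j<m. (if fwd m \<phi> j then 1 else 0::int)) = int c"
      unfolding c_def by (simp add: sum.If_cases Int_def conj_commute)
    finally show ?thesis .
  qed
  have "int m dvd - (2 * int c - int m)" using acc[of m] Lm sd by simp
  then have "int m dvd 2 * int c - int m" by (simp only: dvd_minus_iff)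
  then have "int m dvd (2 * int c - int m) + int m" by (rule dvd_add) simp
  then have "int m dvd int (2 * c)" by simp
  then have "m dvd 2 * c" by (simp only: int_dvd_int_iff)
  then have "m dvd c" using odd by (simp add: coprime_dvd_mult_right_iff)
  then have "c = 0 \<or> c = m" using c_le by (auto dest: dvd_imp_le)
  then show ?thesis
  proof
    assume "c = 0"
    then have "\<forall>i<m. \<not> fwd m \<phi> i" unfolding c_def by auto
    then show ?thesis using fb by auto
  next
    assume "c = m"
    then have "{j\<in>{..<m}. fwd m \<phi> j} = {..<m}" unfolding c_def
      using card_subset_eq[of "{..<m}" "{j\<in>{..<m}. fwd m \<phi> j}"] by auto
    then show ?thesis by auto
  qed
qed

lemma M1: "j < m \<Longrightarrow> r < m \<Longrightarrow> ((j + m - r) mod m + r) mod m = (j::nat)"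
  by (simp add: mod_add_left_eq)
lemma M2: "i < m \<Longrightarrow> r < m \<Longrightarrow> ((i + r) mod m + m - r) mod m = (i::nat)"
proof -
  assume a: "i < m" "r < m"
  have "((i + r) mod m + m - r) mod m = ((i + r) mod m + (m - r)) mod m" using a by simp
  also have "\<dots> = (i + r + (m - r)) mod m" by (simp add: mod_add_left_eq)
  also have "\<dots> = (i + m) mod m" using a by simp
  finally show ?thesis using a by simp
qed
lemma M3: "((i + 1) mod m + r) mod m = Suc ((i + r) mod m) mod (m::nat)"
  by (simp add: mod_add_left_eq mod_Suc_eq)
lemma M4: "a < m \<Longrightarrow> b < m \<Longrightarrow> a * m + b < m * (m::nat)"
proof -
  assume "a < m" "b < m"
  then have "a * m + b < a * m + m" by simp
  also have "\<dots> = (a + 1) * m" by simp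
  also have "\<dots> \<le> m * m" using \<open>a < m\<close> mult_le_mono1[of "a+1" m m] by simp
  finally show ?thesis .
qed

definition Bm :: "nat \<Rightarrow> (nat \<Rightarrow> nat \<Rightarrow> nat \<Rightarrow> 'a::comm_ring_1) \<Rightarrow> nat \<Rightarrow> nat \<Rightarrow> 'a" where
  "Bm m F a b = (if b div m = Suc (a div m) mod m then F (a div m) (a mod m) (b mod m)
     else if a div m = Suc (b div m) mod m then F (b div m) (b mod m) (a mod m) else 0)"

lemma not_both:
  assumes a1: "x < m" and a2: "3 \<le> m" and a3: "y = Suc x mod m" and a4: "x = Suc y mod (m::nat)"
  shows False
proof (cases "Suc x < m")
  case True
  then have y: "y = Suc x" using a3 by simp
  with a4 have x: "x = Suc (Suc x) mod m" by simp
  show False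
  proof (cases "Suc (Suc x) < m")
    case True
    then show False using x by simp
  next
    case False
    then have e: "Suc (Suc x) = m" using \<open>Suc x < m\<close> by simp
    then have "x = 0" using x by simp
    then show False using e a2 by simp
  qed
next
  case False
  then have e: "Suc x = m" using a1 by simp
  then have "y = 0" using a3 by simp
  then have "x = 1 mod m" using a4 by simp
  then show False using e a2 by simp
qed

lemma Bm_sym:
  assumes "a < m * m" "b < m * m" "3 \<le> m"
  shows "Bm m F a b = Bm m F b a"
proof -
  have "a div m < m" using assms by (simp add: less_mult_imp_div_less)
  then have "\<not> (b div m = Suc (a div m) mod m \<and> a div m = Suc (b div m) mod m)"
    using not_both assms(3) by blast
  then show ?thesis unfolding Bm_def by auto
qed

definition Tm :: "nat \<Rightarrow> (nat \<Rightarrow> nat \<Rightarrow> nat \<Rightarrow> 'a::comm_ring_1) \<Rightarrow> (nat \<Rightarrow> nat) \<Rightarrow> 'a" where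
  "Tm m F \<phi> = (\<Prod>i<m. Bm m F (\<phi> i) (\<phi> ((i + 1) mod m)))"

definition Fw :: "nat \<Rightarrow> (nat \<Rightarrow> nat) set" where
  "Fw m = {\<phi>\<in>{0..<m} \<rightarrow>\<^sub>E {0..<m*m}. \<forall>i<m. fwd m \<phi> i}"
definition Bw :: "nat \<Rightarrow> (nat \<Rightarrow> nat) set" where
  "Bw m = {\<phi>\<in>{0..<m} \<rightarrow>\<^sub>E {0..<m*m}. \<forall>i<m. bwd m \<phi> i}"

lemma Fw_layer:
  assumes "\<phi> \<in> Fw m" "i < m"
  shows "\<phi> i div m = (i + \<phi> 0 div m) mod m"
  using assms(2)
proof (induction i)
  case 0
  have "\<phi> 0 < m * m" using assms(1) 0 by (auto simp: Fw_def)
  then have "\<phi> 0 div m < m" by (simp add: less_mult_imp_div_less)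
  then show ?case by simp
next
  case (Suc i)
  have f: "fwd m \<phi> i" using assms(1) Suc by (auto simp: Fw_def)
  have "\<phi> (Suc i) div m = Suc (\<phi> i div m) mod m"
    using f Suc.prems by (simp add: fwd_def)
  also have "\<dots> = Suc ((i + \<phi> 0 div m) mod m) mod m" using Suc by simp
  also have "\<dots> = (Suc i + \<phi> 0 div m) mod m" by (simp add: mod_Suc_eq)
  finally show ?case .
qed

definition hh :: "nat \<Rightarrow> nat \<times> (nat \<Rightarrow> nat) \<Rightarrow> (nat \<Rightarrow> nat)" where
  "hh m p = (case p of (r, u) \<Rightarrow> restrict (\<lambda>i. ((i + r) mod m) * m + u ((i + r) mod m)) {0..<m})"
definition jj :: "nat \<Rightarrow> (nat \<Rightarrow> nat) \<Rightarrow> nat \<times> (nat \<Rightarrow> nat)" where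
  "jj m \<phi> = (\<phi> 0 div m, restrict (\<lambda>j. \<phi> ((j + m - \<phi> 0 div m) mod m) mod m) {0..<m})"

lemma rot_sum:
  assumes m: "0 < m"
  shows "(\<Sum>\<phi>\<in>Fw m. Tm m F \<phi>) = of_nat m * (\<Sum>u\<in>{0..<m} \<rightarrow>\<^sub>E {0..<m}. \<Prod>i<m. F i (u i) (u ((i + 1) mod m)))"
proof -
  let ?D = "{0..<m} \<times> ({0..<m} \<rightarrow>\<^sub>E {0..<m})"
  let ?G = "\<lambda>u. \<Prod>i<m. F i (u i) (u ((i + 1) mod m))"
  have T_hh: "Tm m F (hh m (r, u)) = ?G u" if ru: "(r, u) \<in> ?D" for r u
  proof -
    have r: "r < m" using ru by auto
    have uu: "u j < m" if "j < m" for j using ru that by auto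
    have "Tm m F (hh m (r, u)) = (\<Prod>i<m. F ((i + r) mod m) (u ((i + r) mod m)) (u (((i + r) mod m + 1) mod m)))"
      unfolding Tm_def
    proof (rule prod.cong[OF refl])
      fix i assume "i \<in> {..<m}"
      then have i: "i < m" by simp
      have i1: "(i + 1) mod m < m" using m by simp
      have a: "hh m (r, u) i = ((i + r) mod m) * m + u ((i + r) mod m)" using i by (simp add: hh_def)
      have b: "hh m (r, u) ((i + 1) mod m) = (((i + 1) mod m + r) mod m) * m + u (((i + 1) mod m + r) mod m)"
        using i1 by (simp add: hh_def)
      have c: "((i + 1) mod m + r) mod m = ((i + r) mod m + 1) mod m"
        using M3[of i m r] by (simp add: mod_Suc_eq)
      have u1: "u ((i + r) mod m) < m" using uu m by simp
      have u2: "u (((i + r) mod m + 1) mod m) < m" using uu m by simp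
      show "Bm m F (hh m (r, u) i) (hh m (r, u) ((i + 1) mod m)) =
          F ((i + r) mod m) (u ((i + r) mod m)) (u (((i + r) mod m + 1) mod m))"
        unfolding a b c Bm_def using u1 u2 by simp
    qed
    also have "\<dots> = ?G u"
    proof (rule prod.reindex_bij_witness[where i="\<lambda>j. (j + m - r) mod m" and j="\<lambda>i. (i + r) mod m"])
      fix i assume "i \<in> {..<m}" then show "(((i + r) mod m) + m - r) mod m = i" using M2 r by simp
    next
      fix i assume "i \<in> {..<m}" then show "(i + r) mod m \<in> {..<m}" using m by simp
    next
      fix j assume "j \<in> {..<m}" then show "((j + m - r) mod m + r) mod m = j" using M1 r by simp
    next
      fix j assume "j \<in> {..<m}" then show "(j + m - r) mod m \<in> {..<m}" using m by simp
    next
      fix i assume "i \<in> {..<m}"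
      show "F ((i + r) mod m) (u ((i + r) mod m)) (u (((i + r) mod m + 1) mod m)) =
          F ((i + r) mod m) (u ((i + r) mod m)) (u (((i + r) mod m + 1) mod m))" ..
    qed
    finally show ?thesis .
  qed
  have hj_all: "hh m (jj m \<phi>) = \<phi>" if f: "\<phi> \<in> Fw m" for \<phi>
  proof -
    have pe: "\<phi> \<in> {0..<m} \<rightarrow>\<^sub>E {0..<m*m}" using f by (simp add: Fw_def)
    define r where "r = \<phi> 0 div m"
    have "\<phi> 0 < m * m" using pe m by auto
    then have r: "r < m" by (simp add: r_def less_mult_imp_div_less)
    show ?thesis
    proof
      fix i show "hh m (jj m \<phi>) i = \<phi> i"
      proof (cases "i < m")
        case True
        have im: "(i + r) mod m < m" using m by simp
        have "hh m (jj m \<phi>) i = ((i + r) mod m) * m + \<phi> ((((i + r) mod m) + m - r) mod m) mod m"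
          using True im by (simp add: hh_def jj_def r_def[symmetric])
        also have "\<dots> = ((i + r) mod m) * m + \<phi> i mod m" using M2 True r by simp
        also have "\<dots> = (\<phi> i div m) * m + \<phi> i mod m" using Fw_layer[OF f True] by (simp add: r_def)
        finally show ?thesis by simp
      next
        case False
        then show ?thesis using pe by (auto simp: hh_def jj_def PiE_def extensional_def)
      qed
    qed
  qed
  have "(\<Sum>\<phi>\<in>Fw m. Tm m F \<phi>) = (\<Sum>p\<in>?D. ?G (snd p))"
  proof (rule sum.reindex_bij_witness[where i="hh m" and j="jj m"])
    fix \<phi> assume f: "\<phi> \<in> Fw m"
    show "hh m (jj m \<phi>) = \<phi>" by (rule hj_all[OF f])
    have pe: "\<phi> \<in> {0..<m} \<rightarrow>\<^sub>E {0..<m*m}" using f by (simp add: Fw_def)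
    have "\<phi> 0 < m * m" using pe m by auto
    then have r: "\<phi> 0 div m < m" by (simp add: less_mult_imp_div_less)
    show "jj m \<phi> \<in> ?D" using r m by (auto simp: jj_def)
  next
    fix p assume p: "p \<in> ?D"
    obtain r u where pr: "p = (r, u)" by (cases p)
    have r: "r < m" and u: "u \<in> {0..<m} \<rightarrow>\<^sub>E {0..<m}" using p pr by auto
    have ur: "u r < m" using u r by auto
    have h0: "hh m (r, u) 0 = r * m + u r" using m r by (simp add: hh_def)
    have d0: "hh m (r, u) 0 div m = r" using h0 ur m by simp
    show "jj m (hh m p) = p"
    proof -
      have "restrict (\<lambda>j. hh m (r, u) ((j + m - r) mod m) mod m) {0..<m} = u"
      proof
        fix j show "restrict (\<lambda>j. hh m (r, u) ((j + m - r) mod m) mod m) {0..<m} j = u j"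
        proof (cases "j < m")
          case True
          have jm: "(j + m - r) mod m < m" using m by simp
          have uj: "u j < m" using u True by auto
          have "hh m (r, u) ((j + m - r) mod m) = j * m + u j"
            using jm M1[OF True r] by (simp add: hh_def)
          then show ?thesis using True uj by simp
        next
          case False then show ?thesis using u by (auto simp: PiE_def extensional_def)
        qed
      qed
      then show ?thesis using d0 pr by (simp add: jj_def)
    qed
    show "hh m p \<in> Fw m"
      unfolding Fw_def
    proof (intro CollectI conjI allI impI)
      show "hh m p \<in> {0..<m} \<rightarrow>\<^sub>E {0..<m * m}"
      proof (rule PiE_I)
        fix i assume "i \<in> {0..<m}"
        then have "(i + r) mod m < m" "u ((i + r) mod m) < m" using m u by auto
        then show "hh m p i \<in> {0..<m * m}" using pr \<open>i \<in> {0..<m}\<close> M4 by (simp add: hh_def)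
      next
        fix i assume "i \<notin> {0..<m}" then show "hh m p i = undefined" using pr by (simp add: hh_def)
      qed
    next
      fix i assume i: "i < m"
      have i1: "(i + 1) mod m < m" using m by simp
      have v1: "u ((i + r) mod m) < m" "u (((i + 1) mod m + r) mod m) < m" using m u by auto
      have "hh m p ((i + 1) mod m) div m = ((i + 1) mod m + r) mod m"
        using pr i1 v1 by (simp add: hh_def)
      moreover have "hh m p i div m = (i + r) mod m" using pr i v1 by (simp add: hh_def)
      ultimately show "fwd m (hh m p) i" unfolding fwd_def using M3 by simp
    qed
  next
    fix \<phi> assume f: "\<phi> \<in> Fw m"
    have pe: "\<phi> \<in> {0..<m} \<rightarrow>\<^sub>E {0..<m*m}" using f by (simp add: Fw_def)
    have "\<phi> 0 < m * m" using pe m by auto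
    then have r: "\<phi> 0 div m < m" by (simp add: less_mult_imp_div_less)
    have jD: "jj m \<phi> \<in> ?D" using r m by (auto simp: jj_def)
    have hj: "hh m (jj m \<phi>) = \<phi>" by (fact hj_all[OF f])
    show "?G (snd (jj m \<phi>)) = Tm m F \<phi>"
      using T_hh[of "fst (jj m \<phi>)" "snd (jj m \<phi>)"] jD hj by simp
  qed
  also have "\<dots> = (\<Sum>r\<in>{0..<m}. \<Sum>u\<in>{0..<m} \<rightarrow>\<^sub>E {0..<m}. ?G u)"
    by (simp only: sum.cartesian_product split_def)
  also have "\<dots> = of_nat m * (\<Sum>u\<in>{0..<m} \<rightarrow>\<^sub>E {0..<m}. ?G u)"
    by simp
  finally show ?thesis .
qed


definition rv :: "nat \<Rightarrow> (nat \<Rightarrow> nat) \<Rightarrow> (nat \<Rightarrow> nat)" where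
  "rv m \<phi> = restrict (\<lambda>i. \<phi> ((m - i) mod m)) {0..<m}"

lemma R1: "i < m \<Longrightarrow> (m - (m - i) mod m) mod m = (i::nat)"
  by (cases "i = 0") auto
lemma R2: "i < m \<Longrightarrow> (m - (i + 1) mod m) mod m = m - Suc (i::nat)"
  by (cases "Suc i = m") auto
lemma R3: "i < m \<Longrightarrow> (m - i) mod m = (m - Suc i + 1) mod (m::nat)"
  by (simp add: Suc_diff_Suc)

lemma rv_rv: assumes "\<phi> \<in> {0..<m} \<rightarrow>\<^sub>E X" shows "rv m (rv m \<phi>) = \<phi>"
proof
  fix i show "rv m (rv m \<phi>) i = \<phi> i"
  proof (cases "i < m")
    case True
    then have "(m - i) mod m < m" by simp
    then show ?thesis using True R1[OF True] by (simp add: rv_def)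
  next
    case False then show ?thesis using assms by (auto simp: rv_def PiE_def extensional_def)
  qed
qed

lemma rv_PiE: assumes "\<phi> \<in> {0..<m} \<rightarrow>\<^sub>E X" shows "rv m \<phi> \<in> {0..<m} \<rightarrow>\<^sub>E X"
proof -
  have "(m - i) mod m < m" if "i < m" for i using that by simp
  then show ?thesis using assms by (auto simp: rv_def)
qed

lemma rv_fwd: assumes "i < m" shows "fwd m (rv m \<phi>) i \<longleftrightarrow> bwd m \<phi> (m - Suc i)"
proof -
  have a: "rv m \<phi> ((i + 1) mod m) = \<phi> (m - Suc i)" using assms R2[OF assms] by (simp add: rv_def)
  have b: "rv m \<phi> i = \<phi> ((m - Suc i + 1) mod m)" using assms R3[OF assms] by (simp add: rv_def)
  show ?thesis unfolding fwd_def bwd_def a b ..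
qed

lemma rv_bwd: assumes "i < m" shows "bwd m (rv m \<phi>) i \<longleftrightarrow> fwd m \<phi> (m - Suc i)"
proof -
  have a: "rv m \<phi> ((i + 1) mod m) = \<phi> (m - Suc i)" using assms R2[OF assms] by (simp add: rv_def)
  have b: "rv m \<phi> i = \<phi> ((m - Suc i + 1) mod m)" using assms R3[OF assms] by (simp add: rv_def)
  show ?thesis unfolding fwd_def bwd_def a b ..
qed

lemma all_rev: "(\<forall>i<m. P (m - Suc i)) \<longleftrightarrow> (\<forall>j<(m::nat). P j)"
proof
  assume a: "\<forall>i<m. P (m - Suc i)"
  show "\<forall>j<m. P j"
  proof (intro allI impI)
    fix j assume "j < m"
    then have "m - Suc (m - Suc j) = j" "m - Suc j < m" by auto
    then show "P j" using a by metis
  qed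
qed auto

lemma Tm_rv:
  assumes "\<phi> \<in> {0..<m} \<rightarrow>\<^sub>E {0..<m*m}" "3 \<le> m"
  shows "Tm m F (rv m \<phi>) = Tm m F \<phi>"
proof -
  have "Tm m F (rv m \<phi>) = (\<Prod>i<m. Bm m F (\<phi> ((m - Suc i + 1) mod m)) (\<phi> (m - Suc i)))"
    unfolding Tm_def
  proof (rule prod.cong[OF refl])
    fix i assume "i \<in> {..<m}" then have i: "i < m" by simp
    have a: "rv m \<phi> ((i + 1) mod m) = \<phi> (m - Suc i)" using i R2[OF i] by (simp add: rv_def)
    have b: "rv m \<phi> i = \<phi> ((m - Suc i + 1) mod m)" using i R3[OF i] by (simp add: rv_def)
    show "Bm m F (rv m \<phi> i) (rv m \<phi> ((i + 1) mod m)) = Bm m F (\<phi> ((m - Suc i + 1) mod m)) (\<phi> (m - Suc i))"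
      unfolding a b ..
  qed
  also have "\<dots> = (\<Prod>j<m. Bm m F (\<phi> ((j + 1) mod m)) (\<phi> j))"
    by (rule prod.nat_diff_reindex)
  also have "\<dots> = Tm m F \<phi>" unfolding Tm_def
  proof (rule prod.cong[OF refl])
    fix j assume "j \<in> {..<m}"
    then have "\<phi> j < m * m" "\<phi> ((j + 1) mod m) < m * m" using assms by auto
    then show "Bm m F (\<phi> ((j + 1) mod m)) (\<phi> j) = Bm m F (\<phi> j) (\<phi> ((j + 1) mod m))"
      using Bm_sym assms(2) by blast
  qed
  finally show ?thesis .
qed

lemma rev_sum:
  assumes "3 \<le> m"
  shows "(\<Sum>\<phi>\<in>Bw m. Tm m F \<phi>) = (\<Sum>\<phi>\<in>Fw m. Tm m F \<phi>)"
proof (rule sum.reindex_bij_witness[where i="rv m" and j="rv m"])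
  fix \<phi> assume "\<phi> \<in> Bw m"
  then have p: "\<phi> \<in> {0..<m} \<rightarrow>\<^sub>E {0..<m*m}" and b: "\<forall>i<m. bwd m \<phi> i" by (auto simp: Bw_def)
  show "rv m (rv m \<phi>) = \<phi>" by (rule rv_rv[OF p])
  show "rv m \<phi> \<in> Fw m" using rv_PiE[OF p] b all_rev[where P="bwd m \<phi>" and m=m] by (auto simp: Fw_def rv_fwd)
  show "Tm m F (rv m \<phi>) = Tm m F \<phi>" by (rule Tm_rv[OF p assms])
next
  fix \<phi> assume "\<phi> \<in> Fw m"
  then have p: "\<phi> \<in> {0..<m} \<rightarrow>\<^sub>E {0..<m*m}" and b: "\<forall>i<m. fwd m \<phi> i" by (auto simp: Fw_def)
  show "rv m (rv m \<phi>) = \<phi>" by (rule rv_rv[OF p])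
  show "rv m \<phi> \<in> Bw m" using rv_PiE[OF p] b all_rev[where P="fwd m \<phi>" and m=m] by (auto simp: Bw_def rv_bwd)
qed

lemma split_sum:
  assumes "odd m" "3 \<le> m"
  shows "(\<Sum>\<phi>\<in>{0..<m} \<rightarrow>\<^sub>E {0..<m*m}. Tm m F \<phi>) = (\<Sum>\<phi>\<in>Fw m. Tm m F \<phi>) + (\<Sum>\<phi>\<in>Bw m. Tm m F \<phi>)"
proof -
  let ?A = "{0..<m} \<rightarrow>\<^sub>E {0..<m*m}"
  have fin: "finite ?A" by (simp add: finite_PiE)
  have sub: "Fw m \<union> Bw m \<subseteq> ?A" by (auto simp: Fw_def Bw_def)
  have z: "Tm m F \<phi> = 0" if "\<phi> \<in> ?A - (Fw m \<union> Bw m)" for \<phi>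
  proof -
    have "\<not> ((\<forall>i<m. fwd m \<phi> i) \<or> (\<forall>i<m. bwd m \<phi> i))" using that by (auto simp: Fw_def Bw_def)
    then obtain i where i: "i < m" "\<not> fwd m \<phi> i" "\<not> bwd m \<phi> i" using winding[OF assms(1)] by blast
    then have "Bm m F (\<phi> i) (\<phi> ((i + 1) mod m)) = 0" by (simp add: Bm_def fwd_def bwd_def)
    then show ?thesis unfolding Tm_def using i by (intro prod_zero) auto
  qed
  have "(\<Sum>\<phi>\<in>?A. Tm m F \<phi>) = (\<Sum>\<phi>\<in>Fw m \<union> Bw m. Tm m F \<phi>)"
    by (rule sum.mono_neutral_right[OF fin sub]) (use z in blast)
  also have "\<dots> = (\<Sum>\<phi>\<in>Fw m. Tm m F \<phi>) + (\<Sum>\<phi>\<in>Bw m. Tm m F \<phi>)"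
  proof (rule sum.union_disjoint)
    show "finite (Fw m)" using fin sub by (meson finite_subset le_sup_iff)
    show "finite (Bw m)" using fin sub by (meson finite_subset le_sup_iff)
    show "Fw m \<inter> Bw m = {}"
    proof (rule ccontr)
      assume "Fw m \<inter> Bw m \<noteq> {}"
      then obtain \<phi> where f: "\<phi> \<in> Fw m" "\<phi> \<in> Bw m" by blast
      have m0: "0 < m" using assms by simp
      then have fw: "fwd m \<phi> 0" and bw: "bwd m \<phi> 0" using f by (auto simp: Fw_def Bw_def)
      have e1: "\<phi> (1 mod m) div m = Suc (\<phi> 0 div m) mod m" using fw by (simp add: fwd_def)
      have e2: "\<phi> 0 div m = Suc (\<phi> (1 mod m) div m) mod m" using bw by (simp add: bwd_def)
      have "\<phi> 0 < m * m" using f m0 by (auto simp: Fw_def)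
      then have lt: "\<phi> 0 div m < m" by (simp add: less_mult_imp_div_less)
      show False by (rule not_both[OF lt assms(2) e1 e2])
    qed
  qed
  finally show ?thesis .
qed

lemma main_count:
  assumes "odd m" "3 \<le> m"
  shows "(\<Sum>\<phi>\<in>{0..<m} \<rightarrow>\<^sub>E {0..<m*m}. Tm m F \<phi>) =
     of_nat (2 * m) * (\<Sum>u\<in>{0..<m} \<rightarrow>\<^sub>E {0..<m}. \<Prod>i<m. F i (u i) (u ((i + 1) mod m)))"
  using split_sum[OF assms, of F] rev_sum[OF assms(2), of F] rot_sum[of m F] assms
  by (simp add: algebra_simps)

definition isCV :: "'k::field mpoly \<Rightarrow> bool" where
  "isCV p \<longleftrightarrow> (\<exists>c. p = pConst c) \<or> (\<exists>w. p = pVar w)"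

lemma isCV_0[simp]: "isCV 0" unfolding isCV_def by (metis pConst_0)
lemma isCV_1[simp]: "isCV 1" unfolding isCV_def by (metis pConst_1)
lemma isCV_pVar[simp]: "isCV (pVar x)" unfolding isCV_def by auto
lemma isCV_pConst[simp]: "isCV (pConst c)" unfolding isCV_def by auto

definition Fe :: "'k::field gate list \<Rightarrow> nat \<Rightarrow> nat \<Rightarrow> 'k mpoly" where
  "Fe C w v = (if v = length C then (if w = length C then 1 else 0)
     else if v < length C then (case C ! v of
         GVar x \<Rightarrow> if w = length C then pVar x else 0
       | GConst c \<Rightarrow> if w = length C then pConst c else 0
       | GAdd j l \<Rightarrow> (if w = j then 1 else 0) + (if w = l then 1 else 0)
       | GMul j l \<Rightarrow> if is_input_gate (C ! j) then (if w = l then circuit_vals C ! j else 0)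
                    else (if w = j then circuit_vals C ! l else 0))
     else 0)"

definition Fc :: "'k::field gate list \<Rightarrow> nat \<Rightarrow> 'k \<Rightarrow> nat \<Rightarrow> nat \<Rightarrow> nat \<Rightarrow> 'k mpoly" where
  "Fc C m cc i w v = (if i = m - 1 then (if w = length C - 1 \<and> v = length C then pConst cc else 0) else Fe C w v)"

lemma input_val:
  fixes C :: "'k::field gate list"
  assumes "circuit_wf C" "j < length C" "is_input_gate (C ! j)"
  shows "isCV (circuit_vals C ! j)"
  using circuit_vals_sem[OF assms(1,2)] assms(3)
  by (cases "C ! j") (auto simp: sem_def is_input_gate_def)

lemma isCV_Fe:
  fixes C :: "'k::field gate list"
  assumes "circuit_wf C" "circuit_skew C"
  shows "isCV (Fe C w v)"
proof -
  have ok: "gate_ok v (C ! v)" if "v < length C" using assms that by (simp add: circuit_wf_alt)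
  have sk: "is_input_gate (C ! j) \<or> is_input_gate (C ! l)" if "v < length C" "C ! v = GMul j l" for j l
    using assms(2) that unfolding circuit_skew_def by force
  have two: "isCV (2::'k mpoly)" using isCV_pConst[of "2::'k"] by (simp add: pConst_def)
  show ?thesis
  proof (cases "v < length C")
    case True
    then show ?thesis
    proof (cases "C ! v")
      case (GAdd j l) then show ?thesis using True two by (auto simp: Fe_def)
    next
      case (GMul j l)
      then have jl: "j < length C" "l < length C" using ok[OF True] True by (auto simp: gate_ok_def)
      show ?thesis using GMul True sk[OF True GMul] input_val[OF assms(1) jl(1)] input_val[OF assms(1) jl(2)]
        by (auto simp: Fe_def)
    qed (auto simp: Fe_def)
  qed (auto simp: Fe_def)
qed

lemma isCV_Fc:
  fixes C :: "'k::field gate list"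
  assumes "circuit_wf C" "circuit_skew C"
  shows "isCV (Fc C m cc i w v)"
  using isCV_Fe[OF assms] by (auto simp: Fc_def)

lemma sum_if_single:
  fixes P :: "nat \<Rightarrow> 'a::comm_ring_1"
  assumes "finite S" "a \<in> S"
  shows "(\<Sum>w\<in>S. P w * (if w = a then X else 0)) = P a * X"
  using assms by (simp add: if_distrib[of "\<lambda>x. _ * x"] sum.delta cong: if_cong)

lemma Pw_val:
  fixes C :: "'k::field gate list"
  assumes wf: "circuit_wf C" and sk: "circuit_skew C" and Lm: "length C < m"
  shows "r \<le> m - 1 \<Longrightarrow> Pw (Fc C m cc) {0..<m} (length C) r (length C) = 1 \<and>
      (\<forall>v<length C. v < r \<longrightarrow> Pw (Fc C m cc) {0..<m} (length C) r v = circuit_vals C ! v)"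
proof (induction r)
  case 0
  then show ?case using Lm by (simp add: Pw_0)
next
  case (Suc r)
  let ?L = "length C"
  let ?P = "Pw (Fc C m cc) {0..<m} ?L r"
  let ?val = "\<lambda>i. circuit_vals C ! i"
  have IH1: "?P ?L = 1" and IH2: "\<And>v. v < ?L \<Longrightarrow> v < r \<Longrightarrow> ?P v = ?val v" using Suc by auto
  have rm: "r \<noteq> m - 1" using Suc.prems by simp
  have rec: "Pw (Fc C m cc) {0..<m} ?L (Suc r) v = (\<Sum>w\<in>{0..<m}. ?P w * Fe C w v)" if "v < m" for v
    using Pw_Suc[of "{0..<m}" v "Fc C m cc" ?L r] that rm by (simp add: Fc_def)
  have Lin: "?L \<in> {0..<m}" using Lm by simp
  have A: "Pw (Fc C m cc) {0..<m} ?L (Suc r) ?L = 1"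
  proof -
    have "(\<Sum>w\<in>{0..<m}. ?P w * Fe C w ?L) = (\<Sum>w\<in>{0..<m}. ?P w * (if w = ?L then 1 else 0))"
      by (simp add: Fe_def)
    also have "\<dots> = 1" using sum_if_single[OF _ Lin, of ?P 1] IH1 by simp
    finally show ?thesis using rec[of ?L] Lm by simp
  qed
  have B: "Pw (Fc C m cc) {0..<m} ?L (Suc r) v = ?val v" if v: "v < ?L" "v < Suc r" for v
  proof -
    have vm: "v < m" using v Lm by simp
    have ok: "gate_ok v (C ! v)" using wf v by (simp add: circuit_wf_alt)
    have sv: "?val v = sem ?val (C ! v)" using circuit_vals_sem[OF wf v(1)] .
    have "(\<Sum>w\<in>{0..<m}. ?P w * Fe C w v) = ?val v"
    proof (cases "C ! v")
      case (GVar x)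
      have "(\<Sum>w\<in>{0..<m}. ?P w * Fe C w v) = (\<Sum>w\<in>{0..<m}. ?P w * (if w = ?L then pVar x else 0))"
        using v GVar by (simp add: Fe_def)
      also have "\<dots> = pVar x" using sum_if_single[OF _ Lin, of ?P] IH1 by simp
      finally show ?thesis using sv GVar by (simp add: sem_def)
    next
      case (GConst c)
      have "(\<Sum>w\<in>{0..<m}. ?P w * Fe C w v) = (\<Sum>w\<in>{0..<m}. ?P w * (if w = ?L then pConst c else 0))"
        using v GConst by (simp add: Fe_def)
      also have "\<dots> = pConst c" using sum_if_single[OF _ Lin, of ?P] IH1 by simp
      finally show ?thesis using sv GConst by (simp add: sem_def)
    next
      case (GAdd j l)
      have jl: "j < v" "l < v" using ok GAdd by (auto simp: gate_ok_def)
      then have jlS: "j \<in> {0..<m}" "l \<in> {0..<m}" using vm by auto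
      have "(\<Sum>w\<in>{0..<m}. ?P w * Fe C w v) = (\<Sum>w\<in>{0..<m}. ?P w * (if w = j then 1 else 0)) + (\<Sum>w\<in>{0..<m}. ?P w * (if w = l then 1 else 0))"
        using v GAdd by (simp add: Fe_def distrib_left sum.distrib)
      also have "\<dots> = ?P j + ?P l" using sum_if_single[OF _ jlS(1), of ?P 1] sum_if_single[OF _ jlS(2), of ?P 1] by simp
      also have "\<dots> = ?val j + ?val l" using IH2 jl v by simp
      finally show ?thesis using sv GAdd by (simp add: sem_def)
    next
      case (GMul j l)
      have jl: "j < v" "l < v" using ok GMul by (auto simp: gate_ok_def)
      then have jlS: "j \<in> {0..<m}" "l \<in> {0..<m}" using vm by auto
      show ?thesis
      proof (cases "is_input_gate (C ! j)")
        case True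
        have "(\<Sum>w\<in>{0..<m}. ?P w * Fe C w v) = (\<Sum>w\<in>{0..<m}. ?P w * (if w = l then ?val j else 0))"
          using v GMul True by (simp add: Fe_def)
        also have "\<dots> = ?P l * ?val j" using sum_if_single[OF _ jlS(2), of ?P] by simp
        also have "\<dots> = ?val l * ?val j" using IH2 jl v by simp
        finally show ?thesis using sv GMul by (simp add: sem_def mult.commute)
      next
        case False
        have "(\<Sum>w\<in>{0..<m}. ?P w * Fe C w v) = (\<Sum>w\<in>{0..<m}. ?P w * (if w = j then ?val l else 0))"
          using v GMul False by (simp add: Fe_def)
        also have "\<dots> = ?P j * ?val l" using sum_if_single[OF _ jlS(1), of ?P] by simp
        also have "\<dots> = ?val j * ?val l" using IH2 jl v by simp
        finally show ?thesis using sv GMul by (simp add: sem_def)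
      qed
    qed
    then show ?thesis using rec[OF vm] by simp
  qed
  show ?case using A B by blast
qed


lemma circuit_output_nth:
  assumes "circuit_wf C"
  shows "circuit_output C = circuit_vals C ! (length C - 1)"
proof -
  have ne: "C \<noteq> []" using assms by (simp add: circuit_wf_def)
  show ?thesis unfolding circuit_output_def using ne
    by (metis last_conv_nth length_circuit_vals length_0_conv)
qed

lemma Bm_diag:
  assumes "a < m * m" "2 \<le> m"
  shows "Bm m F a a = 0"
proof -
  have x: "a div m < m" using assms by (simp add: less_mult_imp_div_less)
  have "Suc (a div m) mod m \<noteq> a div m"
  proof (cases "Suc (a div m) < m")
    case True then show ?thesis by simp
  next
    case False then have e: "Suc (a div m) = m" using x by simp
    then have "Suc (a div m) mod m = 0" by simp
    moreover have "a div m \<noteq> 0" using e assms(2) by auto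
    ultimately show ?thesis by simp
  qed
  then show ?thesis unfolding Bm_def by metis
qed

lemma isCV_Bm: "(\<And>i w v. isCV (F i w v)) \<Longrightarrow> isCV (Bm m F a b)"
  unfolding Bm_def by auto

lemma hard_one:
  fixes C :: "'k::field gate list"
  assumes wf: "circuit_wf C" and sk: "circuit_skew C" and mk: "m = 2 * k + 1"
    and Lm: "length C < m" and m3: "3 \<le> m" and ch: "of_nat (2 * m) \<noteq> (0::'k)"
  shows "is_projection (circuit_output C) (cycle_hom_poly k)"
proof -
  define cc where "cc = inverse (of_nat (2 * m) :: 'k)"
  define F where "F = Fc C m cc"
  define \<sigma> where "\<sigma> v = (case prod_decode v of (a, b) \<Rightarrow> Bm m F a b)" for v
  let ?L = "length C"
  let ?A = "{0..<m} \<rightarrow>\<^sub>E {0..<m*m}"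
  obtain n where mn: "m = Suc n" using mk by simp
  have L0: "0 < ?L" using wf by (simp add: circuit_wf_def)
  have cvF: "isCV (F i w v)" for i w v unfolding F_def by (rule isCV_Fc[OF wf sk])
  have sig: "(\<exists>c. \<sigma> v = pConst c) \<or> (\<exists>w. \<sigma> v = pVar w)" for v
  proof -
    obtain a b where "prod_decode v = (a, b)" by (cases "prod_decode v")
    then show ?thesis using isCV_Bm[of F m a b, OF cvF] by (simp add: \<sigma>_def isCV_def)
  qed
  have sig_edge: "psubst \<sigma> (edge_var a b) = Bm m F a b" if "a < m * m" "b < m * m" for a b
  proof -
    have "psubst \<sigma> (edge_var a b) = Bm m F (min a b) (max a b)"
      by (simp add: edge_var_def \<sigma>_def prod_encode_inverse)
    also have "\<dots> = Bm m F a b" using Bm_sym[OF that m3, of F] by (cases "a \<le> b") (auto simp: min_def max_def)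
    finally show ?thesis .
  qed
  have step1: "psubst \<sigma> (cycle_hom_poly k) = (\<Sum>\<phi>\<in>{\<phi>\<in>?A. \<forall>i<m. \<phi> i \<noteq> \<phi> ((i + 1) mod m)}. Tm m F \<phi>)"
  proof -
    have e: "cycle_hom_poly k = (\<Sum>\<phi>\<in>{\<phi>\<in>?A. \<forall>i<m. \<phi> i \<noteq> \<phi> ((i + 1) mod m)}.
        \<Prod>i<m. edge_var (\<phi> i) (\<phi> ((i + 1) mod m)))"
      unfolding cycle_hom_poly_def Let_def mk by (simp add: power2_eq_square)
    show ?thesis unfolding e psubst_sum psubst_prod Tm_def
    proof (rule sum.cong[OF refl], rule prod.cong[OF refl])
      fix \<phi> i assume "\<phi> \<in> {\<phi>\<in>?A. \<forall>i<m. \<phi> i \<noteq> \<phi> ((i + 1) mod m)}" "i \<in> {..<m}"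
      then have "\<phi> i < m * m" "\<phi> ((i + 1) mod m) < m * m" using m3 by auto
      then show "psubst \<sigma> (edge_var (\<phi> i) (\<phi> ((i + 1) mod m))) = Bm m F (\<phi> i) (\<phi> ((i + 1) mod m))"
        by (rule sig_edge)
    qed
  qed
  have step2: "(\<Sum>\<phi>\<in>{\<phi>\<in>?A. \<forall>i<m. \<phi> i \<noteq> \<phi> ((i + 1) mod m)}. Tm m F \<phi>) = (\<Sum>\<phi>\<in>?A. Tm m F \<phi>)"
  proof (rule sum.mono_neutral_left)
    show "finite ?A" by (simp add: finite_PiE)
    show "{\<phi>\<in>?A. \<forall>i<m. \<phi> i \<noteq> \<phi> ((i + 1) mod m)} \<subseteq> ?A" by blast
    show "\<forall>\<phi>\<in>?A - {\<phi>\<in>?A. \<forall>i<m. \<phi> i \<noteq> \<phi> ((i + 1) mod m)}. Tm m F \<phi> = 0"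
    proof
      fix \<phi> assume "\<phi> \<in> ?A - {\<phi>\<in>?A. \<forall>i<m. \<phi> i \<noteq> \<phi> ((i + 1) mod m)}"
      then obtain i where i: "i < m" "\<phi> i = \<phi> ((i + 1) mod m)" and p: "\<phi> \<in> ?A" by blast
      then have "\<phi> i < m * m" by auto
      moreover have m2: "2 \<le> m" using m3 by simp
      ultimately have "Bm m F (\<phi> i) (\<phi> i) = 0" by (rule Bm_diag)
      then have "Bm m F (\<phi> i) (\<phi> ((i + 1) mod m)) = 0" using i by simp
      then show "Tm m F \<phi> = 0" unfolding Tm_def using i(1) by (intro prod_zero) (auto simp del: mod_Suc intro!: bexI[of _ i])
    qed
  qed
  have odd: "odd m" using mk by simp
  have step3: "(\<Sum>\<phi>\<in>?A. Tm m F \<phi>) = of_nat (2 * m) * (\<Sum>u\<in>{0..<m} \<rightarrow>\<^sub>E {0..<m}. \<Prod>i<m. F i (u i) (u ((i + 1) mod m)))"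
    by (rule main_count[OF odd m3])
  have step4: "(\<Sum>u\<in>{0..<m} \<rightarrow>\<^sub>E {0..<m}. \<Prod>i<m. F i (u i) (u ((i + 1) mod m))) =
      Pw F {0..<m} ?L n (?L - 1) * pConst cc"
  proof -
    have "(\<Sum>u\<in>{0..<m} \<rightarrow>\<^sub>E {0..<m}. \<Prod>i<m. F i (u i) (u ((i + 1) mod m))) =
        (\<Sum>s\<in>{0..<m}. \<Sum>v\<in>{0..<m}. Pw F {0..<m} s n v * F n v s)"
      using closed_sum[where S="{0..<m}" and n=n and F=F] mn by simp
    also have "\<dots> = (\<Sum>s\<in>{0..<m}. \<Sum>v\<in>{0..<m}. (if ?L = s \<and> ?L - 1 = v then 1 else 0) * (Pw F {0..<m} s n v * pConst cc))"
      by (intro sum.cong refl) (auto simp: F_def Fc_def mn)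
    also have "\<dots> = Pw F {0..<m} ?L n (?L - 1) * pConst cc"
      by (rule double_delta) (use Lm in auto)
    finally show ?thesis .
  qed
  have step5: "Pw F {0..<m} ?L n (?L - 1) = circuit_output C"
    using Pw_val[OF wf sk Lm, of n cc] L0 Lm mn by (simp add: F_def circuit_output_nth[OF wf])
  have step6: "of_nat (2 * m) * pConst cc = (1::'k mpoly)"
    using ch by (simp add: cc_def pConst_of_nat[symmetric] pConst_mult[symmetric])
  have "psubst \<sigma> (cycle_hom_poly k) = of_nat (2 * m) * (Pw F {0..<m} ?L n (?L - 1) * pConst cc)"
    using step1 step2 step3 step4 by simp
  also have "\<dots> = (of_nat (2 * m) * pConst cc) * Pw F {0..<m} ?L n (?L - 1)"
    by (simp only: mult_ac)
  also have "\<dots> = circuit_output C" using step5 step6 by simp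
  finally have "psubst \<sigma> (cycle_hom_poly k) = circuit_output C" .
  then show ?thesis unfolding is_projection_def using sig by metis
qed

lemma char_lemma:
  assumes "CHAR('k::field) \<noteq> 2" "of_nat (2 * a) = (0::'k)"
  shows "of_nat (2 * (a + 2)) \<noteq> (0::'k)"
proof
  assume h: "of_nat (2 * (a + 2)) = (0::'k)"
  have e: "2 * (a + 2) = 2 * a + 4" by simp
  have "(of_nat (2 * (a + 2)) :: 'k) = of_nat (2 * a) + of_nat 4" by (simp only: e of_nat_add)
  then have f4: "(of_nat 4 :: 'k) = 0" using h assms(2) by (metis add.left_neutral)
  have "(of_nat 2 :: 'k) * of_nat 2 = of_nat 4" using of_nat_mult[of 2 2] by simp
  then have "(of_nat 2 :: 'k) * of_nat 2 = 0" using f4 by simp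
  then have "(of_nat 2 :: 'k) = 0" by (simp only: mult_eq_0_iff) simp
  then have "CHAR('k) dvd 2" by (simp only: of_nat_eq_0_iff_char_dvd)
  then have "CHAR('k) \<le> 2" "CHAR('k) \<noteq> 0" by (auto dest: dvd_imp_le intro: Nat.gr0I)
  then show False using assms(1) CHAR_not_1[where 'a='k] by linarith
qed

lemma poly_bounded_plus3:
  assumes "poly_bounded s" "\<And>n. t n \<le> s n + 3"
  shows "poly_bounded t"
proof -
  obtain c where c: "\<And>n. s n \<le> (n + 2) ^ c" using assms(1) unfolding poly_bounded_def by blast
  have "t n \<le> (n + 2) ^ (c + 2)" for n
  proof -
    have p1: "1 \<le> (n + 2) ^ c" by simp
    have "t n \<le> (n + 2) ^ c + 3" using assms(2)[of n] c[of n] by simp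
    also have "\<dots> \<le> (n + 2) ^ c * 4" using p1 by simp
    also have "\<dots> \<le> (n + 2) ^ c * (n + 2) ^ 2"
    proof (rule mult_le_mono2)
      have "2 * 2 \<le> (n + 2) * (n + 2)" by (intro mult_le_mono) auto
      then show "4 \<le> (n + 2) ^ 2" by (simp add: power2_eq_square)
    qed
    also have "\<dots> = (n + 2) ^ (c + 2)" by (simp only: power_add)
    finally show ?thesis .
  qed
  then show ?thesis unfolding poly_bounded_def by blast
qed

lemma hardness:
  assumes ch: "CHAR('k::field) \<noteq> 2" and g: "g \<in> VBP"
  shows "p_projection g (cycle_hom_poly :: nat \<Rightarrow> 'k mpoly)"
proof -
  obtain s where s: "poly_bounded s" and ex: "\<forall>n. \<exists>C. circuit_wf C \<and> circuit_skew C \<and>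
      length C \<le> s n \<and> circuit_output C = g n"
    using g unfolding VBP_def by blast
  obtain Cf where Cf: "\<And>n. circuit_wf (Cf n) \<and> circuit_skew (Cf n) \<and> length (Cf n) \<le> s n \<and> circuit_output (Cf n) = g n"
    using ex by metis
  define kk where "kk n = (if of_nat (2 * (2 * (length (Cf n) + 2) + 1)) \<noteq> (0::'k) then length (Cf n) + 2 else length (Cf n) + 3)" for n
  have proj: "is_projection (g n) (cycle_hom_poly (kk n))" for n
  proof -
    let ?L = "length (Cf n)"
    have ne: "of_nat (2 * (2 * kk n + 1)) \<noteq> (0::'k)"
    proof (cases "of_nat (2 * (2 * (?L + 2) + 1)) \<noteq> (0::'k)")
      case True then show ?thesis by (simp add: kk_def)
    next
      case False
      then have "of_nat (2 * (2 * (?L + 2) + 1 + 2)) \<noteq> (0::'k)" using char_lemma[OF ch] by blast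
      moreover have "2 * (?L + 2) + 1 + 2 = 2 * kk n + 1" using False by (simp add: kk_def)
      ultimately show ?thesis by metis
    qed
    have "is_projection (circuit_output (Cf n)) (cycle_hom_poly (kk n))"
      by (rule hard_one[OF _ _ refl]) (use Cf ne in \<open>auto simp: kk_def\<close>)
    then show ?thesis using Cf by simp
  qed
  have "poly_bounded kk"
  proof (rule poly_bounded_plus3[OF s])
    fix n have "length (Cf n) \<le> s n" using Cf by blast
    then show "kk n \<le> s n + 3" by (simp add: kk_def)
  qed
  then show ?thesis unfolding p_projection_def using proj by blast
qed

definition mdeg :: "(nat \<Rightarrow>\<^sub>0 nat) \<Rightarrow> nat" where
  "mdeg m = sum (Poly_Mapping.lookup m) (Poly_Mapping.keys m)"

lemma mdeg_superset: "finite S \<Longrightarrow> Poly_Mapping.keys m \<subseteq> S \<Longrightarrow> mdeg m = sum (Poly_Mapping.lookup m) S"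
  unfolding mdeg_def by (rule sum.mono_neutral_left) (auto simp: in_keys_iff)

lemma mdeg_add: "mdeg (a + b) = mdeg a + mdeg b"
proof -
  let ?S = "Poly_Mapping.keys a \<union> Poly_Mapping.keys b"
  have "mdeg (a + b) = sum (Poly_Mapping.lookup (a + b)) ?S"
    by (rule mdeg_superset) (simp_all add: keys_add)
  also have "\<dots> = sum (Poly_Mapping.lookup a) ?S + sum (Poly_Mapping.lookup b) ?S"
    by (simp add: lookup_add sum.distrib)
  also have "\<dots> = mdeg a + mdeg b" by (simp add: mdeg_superset[symmetric])
  finally show ?thesis .
qed

lemma pdeg_le_iff: "pdeg p \<le> d \<longleftrightarrow> (\<forall>m\<in>Poly_Mapping.keys p. mdeg m \<le> d)"
  unfolding pdeg_def mdeg_def[symmetric] by (simp add: Max_le_iff)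

lemma pdeg_keys: "m \<in> Poly_Mapping.keys p \<Longrightarrow> mdeg m \<le> pdeg p"
  using pdeg_le_iff[of p "pdeg p"] by simp

lemma pdeg_add: "pdeg (p + q) \<le> max (pdeg p) (pdeg q)"
  unfolding pdeg_le_iff
proof
  fix m assume m: "m \<in> Poly_Mapping.keys (p + q)"
  have "m \<in> Poly_Mapping.keys p \<union> Poly_Mapping.keys q" using keys_add m by (rule subsetD)
  then show "mdeg m \<le> max (pdeg p) (pdeg q)"
    using pdeg_keys[of m p] pdeg_keys[of m q] by (auto simp: le_max_iff_disj)
qed

lemma pdeg_mult: "pdeg (p * q) \<le> pdeg p + pdeg q"
  unfolding pdeg_le_iff
proof
  fix m assume "m \<in> Poly_Mapping.keys (p * q)"
  then have "m \<in> {a + b | a b. a \<in> Poly_Mapping.keys p \<and> b \<in> Poly_Mapping.keys q}"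
    by (rule subsetD[OF keys_mult])
  then obtain a b where "m = a + b" "a \<in> Poly_Mapping.keys p" "b \<in> Poly_Mapping.keys q"
    by blast
  then show "mdeg m \<le> pdeg p + pdeg q" using pdeg_keys[of a p] pdeg_keys[of b q] by (simp add: mdeg_add)
qed

lemma pdeg_sum: "(\<And>a. a \<in> A \<Longrightarrow> pdeg (f a) \<le> d) \<Longrightarrow> pdeg (sum f A) \<le> d"
proof (induction A rule: infinite_finite_induct)
  case (insert x F)
  have a: "pdeg (f x) \<le> d" using insert.prems by simp
  have b: "pdeg (sum f F) \<le> d" using insert by simp
  show ?case using insert.hyps order_trans[OF pdeg_add[of "f x" "sum f F"] max.boundedI[OF a b]] by simp
qed (simp_all add: pdeg_def)

lemma pdeg_one: "pdeg (1::'k::field mpoly) = 0"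
  unfolding pdeg_def by simp

lemma pdeg_prod: "pdeg (prod f A) \<le> (\<Sum>a\<in>A. pdeg (f a))"
proof (induction A rule: infinite_finite_induct)
  case (insert x F)
  then show ?case using pdeg_mult[of "f x" "prod f F"] by simp
qed (simp_all add: pdeg_one)

lemma pdeg_pVar: "pdeg (pVar x :: 'k::field mpoly) = 1"
  unfolding pdeg_def pVar_def by simp

lemma pvars_add: "pvars (p + q) \<subseteq> pvars p \<union> pvars q"
proof
  fix x assume "x \<in> pvars (p + q)"
  then obtain m where m: "m \<in> Poly_Mapping.keys (p + q)" "x \<in> Poly_Mapping.keys m" unfolding pvars_def by blast
  have "m \<in> Poly_Mapping.keys p \<union> Poly_Mapping.keys q" using keys_add m(1) by (rule subsetD)
  then show "x \<in> pvars p \<union> pvars q" using m(2) unfolding pvars_def by blast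
qed

lemma pvars_mult: "pvars (p * q) \<subseteq> pvars p \<union> pvars q"
proof
  fix x assume "x \<in> pvars (p * q)"
  then obtain m where m: "m \<in> Poly_Mapping.keys (p * q)" "x \<in> Poly_Mapping.keys m" unfolding pvars_def by blast
  from m(1) have "m \<in> {a + b | a b. a \<in> Poly_Mapping.keys p \<and> b \<in> Poly_Mapping.keys q}"
    by (rule subsetD[OF keys_mult])
  then obtain a b where "m = a + b" "a \<in> Poly_Mapping.keys p" "b \<in> Poly_Mapping.keys q"
    by blast
  then have "x \<in> Poly_Mapping.keys a \<union> Poly_Mapping.keys b" using m(2) keys_add[of a b] by blast
  then show "x \<in> pvars p \<union> pvars q" using \<open>a \<in> _\<close> \<open>b \<in> _\<close> unfolding pvars_def by blast
qed

lemma pvars_sum: "(\<And>a. a \<in> A \<Longrightarrow> pvars (f a) \<subseteq> X) \<Longrightarrow> pvars (sum f A) \<subseteq> X"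
proof (induction A rule: infinite_finite_induct)
  case (insert x F)
  then show ?case using pvars_add[of "f x" "sum f F"] by auto
qed (simp_all add: pvars_def)

lemma pvars_prod: "(\<And>a. a \<in> A \<Longrightarrow> pvars (f a) \<subseteq> X) \<Longrightarrow> pvars (prod f A) \<subseteq> X"
proof (induction A rule: infinite_finite_induct)
  case (insert x F)
  then show ?case using pvars_mult[of "f x" "prod f F"] by auto
qed (simp_all add: pvars_def)

lemma pvars_pVar: "pvars (pVar x :: 'k::field mpoly) = {x}"
  unfolding pvars_def pVar_def by simp

definition A0 :: "nat \<Rightarrow> nat \<Rightarrow> 'k::field mpoly" where
  "A0 w v = (if w = v then 0 else edge_var w v)"

definition PW :: "nat \<Rightarrow> nat \<Rightarrow> nat \<Rightarrow> nat \<Rightarrow> 'k::field mpoly" where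
  "PW N s r v = Pw (\<lambda>_. A0) {0..<N} s r v"

lemma PW_Suc: "v < N \<Longrightarrow> PW N s (Suc r) v = (\<Sum>w<N. A0 w v * PW N s r w)"
  unfolding PW_def by (subst Pw_Suc) (auto simp: atLeast0LessThan mult.commute)

lemma PW_0: "v < N \<Longrightarrow> PW N s 0 v = (if s = v then 1 else 0)"
  unfolding PW_def by (rule Pw_0) auto

lemma cycle_PW:
  assumes mk: "m = 2 * k + 1" and N: "N = m * m"
  shows "cycle_hom_poly k = (\<Sum>s<N. PW N s m s :: 'k::field mpoly)"
proof -
  let ?A = "{0..<m} \<rightarrow>\<^sub>E {0..<N}"
  let ?H = "{\<phi>\<in>?A. \<forall>i<m. \<phi> i \<noteq> \<phi> ((i + 1) mod m)}"
  obtain n where mn: "m = Suc n" using mk by simp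
  have "cycle_hom_poly k = (\<Sum>\<phi>\<in>?H. \<Prod>i<m. edge_var (\<phi> i) (\<phi> ((i + 1) mod m)) :: 'k mpoly)"
    unfolding cycle_hom_poly_def Let_def mk N by (simp add: power2_eq_square)
  also have "\<dots> = (\<Sum>\<phi>\<in>?H. \<Prod>i<m. A0 (\<phi> i) (\<phi> ((i + 1) mod m)))"
    by (intro sum.cong refl prod.cong) (auto simp: A0_def)
  also have "\<dots> = (\<Sum>\<phi>\<in>?A. \<Prod>i<m. A0 (\<phi> i) (\<phi> ((i + 1) mod m)))"
  proof (rule sum.mono_neutral_left)
    show "finite ?A" by (simp add: finite_PiE)
    show "?H \<subseteq> ?A" by blast
    show "\<forall>\<phi>\<in>?A - ?H. (\<Prod>i<m. A0 (\<phi> i) (\<phi> ((i + 1) mod m)) :: 'k mpoly) = 0"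
    proof
      fix \<phi> assume "\<phi> \<in> ?A - ?H"
      then obtain i where i: "i < m" "\<phi> i = \<phi> ((i + 1) mod m)" by blast
      then have "A0 (\<phi> i) (\<phi> ((i + 1) mod m)) = (0::'k mpoly)" by (simp add: A0_def)
      then show "(\<Prod>i<m. A0 (\<phi> i) (\<phi> ((i + 1) mod m)) :: 'k mpoly) = 0"
        using i(1) by (intro prod_zero) (auto simp del: mod_Suc intro!: bexI[of _ i])
    qed
  qed
  also have "\<dots> = (\<Sum>s\<in>{0..<N}. \<Sum>v\<in>{0..<N}. PW N s n v * A0 v s)"
    using closed_sum[where S="{0..<N}" and n=n and F="\<lambda>_. A0"] mn by (simp add: PW_def)
  also have "\<dots> = (\<Sum>s<N. PW N s m s)"
    by (simp add: PW_Suc mn atLeast0LessThan mult.commute)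
  finally show ?thesis .
qed

definition Agate :: "nat \<Rightarrow> nat \<Rightarrow> 'k::field gate" where
  "Agate w v = (if w = v then GConst 0 else GVar (prod_encode (min w v, max w v)))"

definition gO :: "nat \<Rightarrow> nat" where "gO N = 2 + N * N"
definition gZ :: "nat \<Rightarrow> nat \<Rightarrow> nat" where "gZ N m = gO N + N * m * N * (2 * N)"
definition gidx :: "nat \<Rightarrow> nat \<Rightarrow> nat \<Rightarrow> nat \<Rightarrow> nat \<Rightarrow> nat" where
  "gidx N m s r v = (if r = 0 then (if s = v then 1 else 0)
     else gO N + ((s * m + (r - 1)) * N + v) * (2 * N) + (2 * N - 1))"

definition gate :: "nat \<Rightarrow> nat \<Rightarrow> nat \<Rightarrow> 'k::field gate" where
  "gate N m i = (if i = 0 then GConst 0 else if i = 1 then GConst 1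
     else if i < gO N then Agate ((i - 2) div N) ((i - 2) mod N)
     else if i < gZ N m then
       (let q = (i - gO N) div (2 * N); t = (i - gO N) mod (2 * N);
            v = q mod N; r = (q div N) mod m; s = (q div N) div m; w = t div 2 in
        if even t then GMul (2 + w * N + v) (gidx N m s r w)
        else GAdd (if w = 0 then 0 else i - 2) (i - 1))
     else GAdd (if i = gZ N m then 0 else i - 1) (gidx N m (i - gZ N m) m (i - gZ N m)))"

definition VV :: "nat \<Rightarrow> nat \<Rightarrow> nat \<Rightarrow> 'k::field mpoly" where
  "VV N m i = (if i = 0 then 0 else if i = 1 then 1
     else if i < gO N then A0 ((i - 2) div N) ((i - 2) mod N)
     else if i < gZ N m then
       (let q = (i - gO N) div (2 * N); t = (i - gO N) mod (2 * N);
            v = q mod N; r = (q div N) mod m; s = (q div N) div m; w = t div 2 in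
        if even t then A0 w v * PW N s r w
        else (\<Sum>w'<Suc w. A0 w' v * PW N s r w'))
     else (\<Sum>s'<Suc (i - gZ N m). PW N s' m s'))"

definition circ :: "nat \<Rightarrow> nat \<Rightarrow> 'k::field gate list" where
  "circ N m = map (gate N m) [0..<gZ N m + N]"

lemma dm: "t < (d::nat) \<Longrightarrow> (q * d + t) div d = q \<and> (q * d + t) mod d = t"
  by simp

lemma sem_Agate: "sem V (Agate w v) = A0 w v"
  by (simp add: Agate_def sem_def A0_def edge_var_def)

lemma input_Agate: "is_input_gate (Agate w v)"
  by (simp add: Agate_def is_input_gate_def)

lemma agate_ok: "gate_ok i (Agate w v)"
  by (simp add: Agate_def gate_ok_def)
lemma agate_not_mul: "Agate w v \<noteq> GMul a b"
  by (simp add: Agate_def)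

context
  fixes N m :: nat
  assumes N0: "0 < N" and m0: "0 < m"
begin

lemma VV_input:
  assumes "w < N" "v < N"
  shows "VV N m (2 + w * N + v) = A0 w v"
proof -
  have "w * N + v < N * N"
  proof -
    have "w * N + v < w * N + N" using assms by simp
    also have "\<dots> = (w + 1) * N" by simp
    also have "\<dots> \<le> N * N" using assms(1) by (intro mult_le_mono1) simp
    finally show ?thesis .
  qed
  then show ?thesis using assms dm[of v N w] by (simp add: VV_def gO_def)
qed

lemma blk_bound:
  assumes "s < N" "r < m" "v < N"
  shows "(s * m + r) * N + v < N * m * N"
proof -
  have "s * m + r < N * m"
  proof -
    have "s * m + r < s * m + m" using assms by simp
    also have "\<dots> = (s + 1) * m" by simp
    also have "\<dots> \<le> N * m" using assms(1) by (intro mult_le_mono1) simp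
    finally show ?thesis .
  qed
  then have "s * m + r + 1 \<le> N * m" by simp
  have "(s * m + r) * N + v < (s * m + r) * N + N" using assms by simp
  also have "\<dots> = (s * m + r + 1) * N" by simp
  also have "\<dots> \<le> (N * m) * N" using \<open>s * m + r + 1 \<le> N * m\<close> by (intro mult_le_mono1)
  finally show ?thesis by simp
qed

lemma blk_decode:
  assumes "s < N" "r < m" "v < N" "t < 2 * N"
  defines "i \<equiv> gO N + ((s * m + r) * N + v) * (2 * N) + t"
  shows "gO N \<le> i" "i < gZ N m" "(i - gO N) div (2 * N) = (s * m + r) * N + v"
    "(i - gO N) mod (2 * N) = t"
    "((i - gO N) div (2 * N)) mod N = v" "(((i - gO N) div (2 * N)) div N) mod m = r"
    "(((i - gO N) div (2 * N)) div N) div m = s"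
proof -
  let ?q = "(s * m + r) * N + v"
  have iq: "i - gO N = ?q * (2 * N) + t" unfolding i_def by simp
  show "gO N \<le> i" unfolding i_def by simp
  have "?q < N * m * N" by (rule blk_bound[OF assms(1-3)])
  then have "?q + 1 \<le> N * m * N" by simp
  then have "(?q + 1) * (2 * N) \<le> N * m * N * (2 * N)" by (rule mult_le_mono1)
  moreover have "?q * (2 * N) + t < (?q + 1) * (2 * N)" using assms(4) by simp
  ultimately show "i < gZ N m" unfolding i_def gZ_def by linarith
  show "(i - gO N) div (2 * N) = ?q" "(i - gO N) mod (2 * N) = t"
    unfolding iq using dm[OF assms(4), of ?q] by auto
  then show "((i - gO N) div (2 * N)) mod N = v" "(((i - gO N) div (2 * N)) div N) mod m = r"
    "(((i - gO N) div (2 * N)) div N) div m = s"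
    using assms by (simp_all add: dm)
qed

lemma VV_gidx:
  assumes "s < N" "r \<le> m" "w < N"
  shows "VV N m (gidx N m s r w) = PW N s r w"
proof (cases r)
  case 0
  then show ?thesis using assms by (simp add: gidx_def VV_def PW_0)
next
  case (Suc r')
  have r': "r' < m" using assms Suc by simp
  have t: "2 * N - 1 < 2 * N" using N0 by simp
  note d = blk_decode[OF assms(1) r' assms(3) t]
  let ?i = "gO N + ((s * m + r') * N + w) * (2 * N) + (2 * N - 1)"
  have g: "gidx N m s r w = ?i" using Suc by (simp add: gidx_def)
  have O2: "2 \<le> gO N" by (simp add: gO_def)
  have "odd (2 * N - 1)" using N0 by simp
  moreover have "(2 * N - 1) div 2 = N - 1" using N0 by simp
  ultimately have "VV N m ?i = (\<Sum>w'<N. A0 w' w * PW N s r' w')"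
    using d O2 N0 by (simp add: VV_def Let_def)
  also have "\<dots> = PW N s r w" using Suc by (simp add: PW_Suc[OF assms(3)])
  finally show ?thesis using g by simp
qed

lemma inp_bound: "w < N \<Longrightarrow> v < N \<Longrightarrow> 2 + w * N + v < gO N"
proof -
  assume a: "w < N" "v < N"
  have "w * N + v < w * N + N" using a by simp
  also have "\<dots> = (w + 1) * N" by simp
  also have "\<dots> \<le> N * N" using a(1) by (intro mult_le_mono1) simp
  finally show ?thesis by (simp add: gO_def)
qed

lemma blk_cases:
  assumes "gO N \<le> i" "i < gZ N m"
  obtains s r v t where "s < N" "r < m" "v < N" "t < 2 * N"
    "i = gO N + ((s * m + r) * N + v) * (2 * N) + t"
proof -
  define q where "q = (i - gO N) div (2 * N)"
  define t where "t = (i - gO N) mod (2 * N)"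
  have "i - gO N = q * (2 * N) + t" unfolding q_def t_def by (rule div_mult_mod_eq[symmetric])
  then have it: "i = gO N + q * (2 * N) + t" using assms(1) by linarith
  have t: "t < 2 * N" using N0 unfolding t_def by simp
  have "q * (2 * N) < N * m * N * (2 * N)" using assms(2) it unfolding gZ_def by linarith
  then have q: "q < N * m * N" by simp
  define v where "v = q mod N"
  define q' where "q' = q div N"
  have qv: "q = q' * N + v" unfolding v_def q'_def by simp
  have v: "v < N" using N0 unfolding v_def by simp
  have q': "q' < N * m" using q unfolding q'_def by (simp add: less_mult_imp_div_less mult.commute)
  define r where "r = q' mod m"
  define s where "s = q' div m"
  have qr: "q' = s * m + r" unfolding r_def s_def by simp
  have r: "r < m" using m0 unfolding r_def by simp
  have s: "s < N" using q' unfolding s_def by (simp add: less_mult_imp_div_less)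
  show ?thesis using that[OF s r v t] it qv qr by simp
qed

lemma block_facts:
  assumes "s < N" "r < m" "v < N" "t < 2 * N"
  defines "i \<equiv> gO N + ((s * m + r) * N + v) * (2 * N) + t"
  shows "gate N m i = (if even t then GMul (2 + (t div 2) * N + v) (gidx N m s r (t div 2))
            else GAdd (if t div 2 = 0 then 0 else i - 2) (i - 1))"
    "VV N m i = (if even t then A0 (t div 2) v * PW N s r (t div 2)
            else (\<Sum>w'<Suc (t div 2). A0 w' v * PW N s r w'))"
proof -
  note d = blk_decode[OF assms(1-4), folded i_def]
  have O2: "2 \<le> gO N" by (simp add: gO_def)
  have i2: "i \<noteq> 0" "i \<noteq> 1" "\<not> i < gO N" using d(1) O2 by simp_all
  show "gate N m i = (if even t then GMul (2 + (t div 2) * N + v) (gidx N m s r (t div 2))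
            else GAdd (if t div 2 = 0 then 0 else i - 2) (i - 1))"
    unfolding gate_def Let_def using i2 d(2,4-7) by (simp only: if_False if_True)
  show "VV N m i = (if even t then A0 (t div 2) v * PW N s r (t div 2)
            else (\<Sum>w'<Suc (t div 2). A0 w' v * PW N s r w'))"
    unfolding VV_def Let_def using i2 d(2,4-7) by (simp only: if_False if_True)
qed

lemma gidx_lt:
  assumes "s < N" "r \<le> m" "w < N" "0 < r"
  shows "gidx N m s r w < gO N + ((s * m + (r - 1)) * N + w + 1) * (2 * N)"
  using assms N0 by (simp add: gidx_def algebra_simps)

lemma circ_ok:
  assumes i: "i < gZ N m + N"
  shows "gate_ok i (gate N m i :: 'k::field gate) \<and> VV N m i = sem (VV N m) (gate N m i :: 'k gate) \<and>
    (\<forall>a b. gate N m i = (GMul a b :: 'k gate) \<longrightarrow> a < i \<and> is_input_gate (gate N m a :: 'k gate))"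
proof -
  have O2: "2 \<le> gO N" by (simp add: gO_def)
  have OZ: "gO N \<le> gZ N m" by (simp add: gZ_def)
  consider "i = 0" | "i = 1" | "2 \<le> i \<and> i < gO N" | "gO N \<le> i \<and> i < gZ N m" | "gZ N m \<le> i" by linarith
  then show ?thesis
  proof cases
    case 1 then show ?thesis by (simp add: gate_def VV_def sem_def gate_ok_def)
  next
    case 2 then show ?thesis by (simp add: gate_def VV_def sem_def gate_ok_def)
  next
    case 3
    then have g: "gate N m i = (Agate ((i - 2) div N) ((i - 2) mod N) :: 'k gate)" by (simp add: gate_def)
    have v: "VV N m i = (A0 ((i - 2) div N) ((i - 2) mod N) :: 'k mpoly)" using 3 by (simp add: VV_def)
    show ?thesis unfolding g v by (simp add: sem_Agate agate_ok agate_not_mul)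
  next
    case 4
    then obtain s r v t where srvt: "s < N" "r < m" "v < N" "t < 2 * N"
      and ie: "i = gO N + ((s * m + r) * N + v) * (2 * N) + t" using blk_cases by blast
    note bf = block_facts[OF srvt, folded ie]
    let ?w = "t div 2"
    have w: "?w < N" using srvt(4) by simp
    show ?thesis
    proof (cases "even t")
      case True
      have g: "gate N m i = (GMul (2 + ?w * N + srvt_v) (gidx N m s r ?w) :: 'k gate)" if "srvt_v = v" for srvt_v
        using bf(1) True that by simp
      have vi: "VV N m i = (A0 ?w v * PW N s r ?w :: 'k mpoly)" using bf(2) True by simp
      have inb: "2 + ?w * N + v < gO N" by (rule inp_bound[OF w srvt(3)])
      have vin: "VV N m (2 + ?w * N + v) = (A0 ?w v :: 'k mpoly)" by (rule VV_input[OF w srvt(3)])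
      have vg: "VV N m (gidx N m s r ?w) = (PW N s r ?w :: 'k mpoly)"
        by (rule VV_gidx[OF srvt(1) _ w]) (use srvt in simp)
      have lt1: "2 + ?w * N + v < i" using inb 4 by simp
      have lt2: "gidx N m s r ?w < i"
      proof (cases "r = 0")
        case True then show ?thesis using O2 4 by (simp add: gidx_def)
      next
        case False
        have "gidx N m s r ?w < gO N + ((s * m + (r - 1)) * N + ?w + 1) * (2 * N)"
          by (rule gidx_lt) (use srvt w False in auto)
        also have "\<dots> \<le> gO N + ((s * m + r) * N) * (2 * N)"
        proof -
          have "(s * m + (r - 1)) * N + ?w + 1 \<le> (s * m + (r - 1)) * N + N" using w by simp
          also have "\<dots> = (s * m + r) * N" using False by (cases r) (auto simp: algebra_simps)
          finally have "(s * m + (r - 1)) * N + ?w + 1 \<le> (s * m + r) * N" .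
          then have "((s * m + (r - 1)) * N + ?w + 1) * (2 * N) \<le> ((s * m + r) * N) * (2 * N)"
            by (rule mult_le_mono1)
          then show ?thesis by (simp only: add_le_cancel_left)
        qed
        also have "\<dots> \<le> i" unfolding ie by (simp add: algebra_simps)
        finally show ?thesis .
      qed
      have inp: "is_input_gate (gate N m (2 + ?w * N + v) :: 'k gate)"
        using inb by (simp add: gate_def input_Agate)
      show ?thesis using g[OF refl] vi vin vg lt1 lt2 inp by (simp add: sem_def gate_ok_def)
    next
      case False
      have g: "gate N m i = (GAdd (if ?w = 0 then 0 else i - 2) (i - 1) :: 'k gate)" using bf(1) False by simp
      have vi: "VV N m i = (\<Sum>w'<Suc ?w. A0 w' v * PW N s r w' :: 'k mpoly)" using bf(2) False by simp
      have t1: "t - 1 < 2 * N" "even (t - 1)" "(t - 1) div 2 = ?w" using srvt(4) False by (auto elim!: oddE)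
      have ie1: "i - 1 = gO N + ((s * m + r) * N + v) * (2 * N) + (t - 1)" using ie False by (cases t) auto
      have v1: "VV N m (i - 1) = (A0 ?w v * PW N s r ?w :: 'k mpoly)"
        using block_facts(2)[OF srvt(1-3) t1(1)] t1 ie1 by simp
      show ?thesis
      proof (cases "?w = 0")
        case True
        then show ?thesis using g vi v1 4 O2 by (simp add: sem_def gate_ok_def VV_def)
      next
        case w0: False
        have t2: "t - 2 < 2 * N" "odd (t - 2)" "(t - 2) div 2 = ?w - 1" using srvt(4) False w0 by (auto elim!: oddE)
        have ie2: "i - 2 = gO N + ((s * m + r) * N + v) * (2 * N) + (t - 2)" using ie False w0 by (cases t) auto
        have v2: "VV N m (i - 2) = (\<Sum>w'<?w. A0 w' v * PW N s r w' :: 'k mpoly)"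
          using block_facts(2)[OF srvt(1-3) t2(1)] t2 ie2 w0 by simp
        show ?thesis using g vi v1 v2 4 O2 w0 by (simp add: sem_def gate_ok_def)
      qed
    qed
  next
    case 5
    define s' where "s' = i - gZ N m"
    have s': "s' < N" using i 5 unfolding s'_def by simp
    have g: "gate N m i = (GAdd (if i = gZ N m then 0 else i - 1) (gidx N m s' m s') :: 'k gate)"
      using 5 OZ O2 by (simp add: gate_def s'_def)
    have vi: "VV N m i = (\<Sum>s''<Suc s'. PW N s'' m s'' :: 'k mpoly)" using 5 OZ O2 by (simp add: VV_def s'_def)
    have vg: "VV N m (gidx N m s' m s') = (PW N s' m s' :: 'k mpoly)" by (rule VV_gidx[OF s' _ s']) simp
    have gl: "gidx N m s' m s' < gZ N m"
    proof -
      have "m - 1 < m" "2 * N - 1 < 2 * N" using m0 N0 by auto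
      from blk_decode(2)[OF s' this(1) s' this(2)] show ?thesis using m0 by (simp add: gidx_def)
    qed
    show ?thesis
    proof (cases "i = gZ N m")
      case True
      then show ?thesis using g vi vg gl O2 OZ by (simp add: sem_def gate_ok_def s'_def VV_def)
    next
      case False
      have v1: "VV N m (i - 1) = (\<Sum>s''<s'. PW N s'' m s'' :: 'k mpoly)"
      proof -
        have ge: "gZ N m \<le> i - 1" using 5 False by simp
        then have c: "i - 1 \<noteq> 0" "i - 1 \<noteq> 1" "\<not> i - 1 < gO N" "\<not> i - 1 < gZ N m"
          using OZ O2 by auto
        have e: "Suc (i - 1 - gZ N m) = s'" using 5 False unfolding s'_def by simp
        show ?thesis unfolding VV_def using c e by (simp only: if_False)
      qed
      show ?thesis using g vi vg gl v1 5 False by (simp add: sem_def gate_ok_def)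
    qed
  qed
qed

lemma circ_correct:
  shows "circuit_wf (circ N m :: 'k::field gate list)" "circuit_skew (circ N m :: 'k gate list)"
    "circuit_output (circ N m :: 'k gate list) = (\<Sum>s<N. PW N s m s)"
    "length (circ N m :: 'k gate list) = gZ N m + N"
proof -
  let ?C = "circ N m :: 'k gate list"
  have len: "length ?C = gZ N m + N" by (simp add: circ_def)
  have nth: "?C ! i = gate N m i" if "i < gZ N m + N" for i using that by (simp add: circ_def)
  show wf: "circuit_wf ?C"
    unfolding circuit_wf_alt using len nth circ_ok N0 by auto
  show "circuit_skew ?C"
    unfolding circuit_skew_def
  proof (intro allI impI)
    fix i assume i: "i < length ?C"
    show "case ?C ! i of GMul j l \<Rightarrow> is_input_gate (?C ! j) \<or> is_input_gate (?C ! l) | _ \<Rightarrow> True"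
    proof (cases "?C ! i")
      case (GMul a b)
      then have "a < i \<and> is_input_gate (gate N m a :: 'k gate)" using circ_ok[of i] i len nth by auto
      then show ?thesis using GMul nth[of a] i len by auto
    qed auto
  qed
  have "circuit_output ?C = VV N m (length ?C - 1)"
    by (rule circuit_output_eqI[OF wf]) (use circ_ok nth len in auto)
  also have "\<dots> = (\<Sum>s<N. PW N s m s)"
  proof -
    have c: "gZ N m + N - 1 \<noteq> 0" "gZ N m + N - 1 \<noteq> 1" "\<not> gZ N m + N - 1 < gO N" "\<not> gZ N m + N - 1 < gZ N m"
      using N0 m0 by (auto simp: gZ_def gO_def)
    have e: "Suc (gZ N m + N - 1 - gZ N m) = N" using N0 by simp
    show ?thesis unfolding len VV_def using c e by (simp only: if_False)
  qed
  finally show "circuit_output ?C = (\<Sum>s<N. PW N s m s)" .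
  show "length ?C = gZ N m + N" by (rule len)
qed

end

lemma pb_const: "poly_bounded (\<lambda>_. c)"
proof -
  have "c \<le> (n + 2) ^ c" for n
  proof -
    have "c < 2 ^ c" by (rule less_exp)
    also have "(2::nat) ^ c \<le> (n + 2) ^ c" by (rule power_mono) auto
    finally show ?thesis by simp
  qed
  then show ?thesis unfolding poly_bounded_def by blast
qed

lemma pb_id: "poly_bounded (\<lambda>n. n)"
  unfolding poly_bounded_def by (rule exI[of _ 1]) simp

lemma pb_add:
  assumes "poly_bounded f" "poly_bounded g"
  shows "poly_bounded (\<lambda>n. f n + g n)"
proof -
  obtain a b where a: "\<And>n. f n \<le> (n + 2) ^ a" and b: "\<And>n. g n \<le> (n + 2) ^ b"
    using assms unfolding poly_bounded_def by blast
  have "f n + g n \<le> (n + 2) ^ (max a b + 1)" for n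
  proof -
    have "(n + 2) ^ a \<le> (n + 2) ^ max a b" by (rule power_increasing) auto
    moreover have "(n + 2) ^ b \<le> (n + 2) ^ max a b" by (rule power_increasing) auto
    ultimately have "f n + g n \<le> 2 * (n + 2) ^ max a b" using a[of n] b[of n] by linarith
    also have "\<dots> \<le> (n + 2) * (n + 2) ^ max a b" by (rule mult_le_mono1) simp
    finally show ?thesis by simp
  qed
  then show ?thesis unfolding poly_bounded_def by blast
qed

lemma pb_mult:
  assumes "poly_bounded f" "poly_bounded g"
  shows "poly_bounded (\<lambda>n. f n * g n)"
proof -
  obtain a b where a: "\<And>n. f n \<le> (n + 2) ^ a" and b: "\<And>n. g n \<le> (n + 2) ^ b"
    using assms unfolding poly_bounded_def by blast
  have "f n * g n \<le> (n + 2) ^ (a + b)" for n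
    using mult_le_mono[OF a[of n] b[of n]] by (simp add: power_add)
  then show ?thesis unfolding poly_bounded_def by blast
qed

lemma pb_mono: "poly_bounded f \<Longrightarrow> (\<And>n. g n \<le> f n) \<Longrightarrow> poly_bounded g"
  unfolding poly_bounded_def by (meson order_trans)

lemmas pb_intros = pb_add pb_mult pb_const pb_id

lemma cycle_pvars:
  "pvars (cycle_hom_poly k :: 'k::field mpoly) \<subseteq>
     (\<lambda>(a, b). prod_encode (a, b)) ` ({0..<(2*k+1)*(2*k+1)} \<times> {0..<(2*k+1)*(2*k+1)})"
  unfolding cycle_hom_poly_def Let_def
proof (intro pvars_sum pvars_prod)
  fix \<phi> i
  assume \<phi>: "\<phi> \<in> {\<phi> \<in> {0..<2 * k + 1} \<rightarrow>\<^sub>E {0..<(2 * k + 1)\<^sup>2}. \<forall>i<2 * k + 1. \<phi> i \<noteq> \<phi> ((i + 1) mod (2 * k + 1))}"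
    and i: "i \<in> {..<2 * k + 1}"
  have "\<phi> i < (2*k+1)*(2*k+1)" "\<phi> ((i + 1) mod (2 * k + 1)) < (2*k+1)*(2*k+1)"
    using \<phi> i by (auto simp: power2_eq_square)
  then show "pvars (edge_var (\<phi> i) (\<phi> ((i + 1) mod (2 * k + 1))) :: 'k mpoly) \<subseteq>
      (\<lambda>(a, b). prod_encode (a, b)) ` ({0..<(2*k+1)*(2*k+1)} \<times> {0..<(2*k+1)*(2*k+1)})"
    by (auto simp: edge_var_def pvars_pVar min_def max_def)
qed

lemma cycle_pdeg: "pdeg (cycle_hom_poly k :: 'k::field mpoly) \<le> 2 * k + 1"
  unfolding cycle_hom_poly_def Let_def
proof (intro pdeg_sum)
  fix \<phi>
  have "pdeg (\<Prod>i<2 * k + 1. edge_var (\<phi> i) (\<phi> ((i + 1) mod (2 * k + 1))) :: 'k mpoly) \<le>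
      (\<Sum>i<2 * k + 1. pdeg (edge_var (\<phi> i) (\<phi> ((i + 1) mod (2 * k + 1))) :: 'k mpoly))"
    by (rule pdeg_prod)
  also have "\<dots> = 2 * k + 1" by (simp add: edge_var_def pdeg_pVar)
  finally show "pdeg (\<Prod>i<2 * k + 1. edge_var (\<phi> i) (\<phi> ((i + 1) mod (2 * k + 1))) :: 'k mpoly) \<le> 2 * k + 1" .
qed

lemma cycle_in_VBP: "(cycle_hom_poly :: nat \<Rightarrow> 'k::field mpoly) \<in> VBP"
proof -
  let ?m = "\<lambda>k::nat. 2 * k + 1"
  let ?N = "\<lambda>k::nat. (2 * k + 1) * (2 * k + 1)"
  define b where "b k = ?N k * ?N k + ?m k" for k
  define s where "s k = gZ (?N k) (?m k) + ?N k" for k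
  have pbb: "poly_bounded b" unfolding b_def by (intro pb_intros)
  have pbs: "poly_bounded s" unfolding s_def gZ_def gO_def by (intro pb_intros)
  have fam: "card (pvars (cycle_hom_poly k :: 'k mpoly)) \<le> b k \<and> pdeg (cycle_hom_poly k :: 'k mpoly) \<le> b k" for k
  proof
    have "card (pvars (cycle_hom_poly k :: 'k mpoly)) \<le>
        card ((\<lambda>(a, b). prod_encode (a, b)) ` ({0..<?N k} \<times> {0..<?N k}))"
      by (rule card_mono[OF _ cycle_pvars]) simp
    also have "\<dots> \<le> card ({0..<?N k} \<times> {0..<?N k})" by (rule card_image_le) simp
    also have "\<dots> \<le> b k" by (simp add: b_def)
    finally show "card (pvars (cycle_hom_poly k :: 'k mpoly)) \<le> b k" .
    have "2 * k + 1 \<le> b k" unfolding b_def by (rule le_add2)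
    then show "pdeg (cycle_hom_poly k :: 'k mpoly) \<le> b k" using cycle_pdeg[of k] by (rule le_trans[rotated])
  qed
  have circ: "\<exists>C. circuit_wf C \<and> circuit_skew C \<and> length C \<le> s k \<and> circuit_output C = (cycle_hom_poly k :: 'k mpoly)" for k
  proof -
    have N0: "0 < ?N k" and m0: "0 < ?m k" by simp_all
    note cc = circ_correct[OF N0 m0, where 'k='k]
    have "circuit_output (circ (?N k) (?m k) :: 'k gate list) = cycle_hom_poly k"
      unfolding cc(3) by (rule cycle_PW[symmetric]) simp_all
    then show ?thesis using cc(1,2,4) by (intro exI[of _ "circ (?N k) (?m k)"]) (simp add: s_def)
  qed
  show ?thesis unfolding VBP_def p_family_def using pbb pbs fam circ by blast
qed

theorem theorem6:
  assumes "CHAR('k::field) \<noteq> 2"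
  shows "VBP_complete (cycle_hom_poly :: nat \<Rightarrow> 'k mpoly)"
  unfolding VBP_complete_def using cycle_in_VBP hardness[OF assms] by blast

end
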